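(* For any natural number $n \geq 1$, $\{\omega \cdot 2, \omega^\star \cdot 2\} \leq_c \{\omega^2 \cdot n, (\omega^2)^\star \cdot n\}$.
   Context: Structures have domains contained in $\omega$. For countable structures $\mathcal{A},\mathcal{B}$, the class $\{\mathcal{A},\mathcal{B}\}$ denotes the class of all structures (with domain $\subseteq\omega$) isomorphic to $\mathcal{A}$ or to $\mathcal{B}$. Linear orders are in the language $\{<\}$; $L^\star$ is the reverse of a linear order $L$; $\omega\cdot 2$, $\omega^2\cdot n$ are ordinal order types. An enumeration operator $\Gamma$ is a c.e. set of pairs $(\alpha,\varphi)$ with $\alpha$ a finite set of basic (atomic or negated atomic) sentences of the input language with constants from $\omega$ and $\varphi$ a basic sentence of the output language with constants from $\omega$; $\Gamma(X)=\{\varphi : (\alpha,\varphi)\in\Gamma,\ \alpha\subseteq X\}$. $\Gamma$ is a computable embedding of $\mathcal{K}_0$ into $\mathcal{K}_1$ ($\mathcal{K}_0\leq_c\mathcal{K}_1$) if for every $\mathcal{A}\in\mathcal{K}_0$, $\Gamma$ applied to the atomic diagram of $\mathcal{A}$ is the atomic diagram of a structure $\Gamma(\mathcal{A})\in\mathcal{K}_1$, and for all $\mathcal{A},\mathcal{B}\in\mathcal{K}_0$, $\mathcal{A}\cong\mathcal{B}$ iff $\Gamma(\mathcal{A})\cong\Gamma(\mathcal{B})$. *)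

theory Defs
  imports Main "HOL-Library.Nat_Bijection"
begin

datatype recf = Zero | Succ | Proj nat | Comp recf "recf list" | Prim recf recf | Mn recf

inductive eval :: "recf \<Rightarrow> nat list \<Rightarrow> nat \<Rightarrow> bool" where
  zero: "eval Zero xs 0"
| succ: "eval Succ (x # xs) (Suc x)"
| proj: "i < length xs \<Longrightarrow> eval (Proj i) xs (xs ! i)"
| comp: "length ys = length gs \<Longrightarrow> (\<forall>i < length gs. eval (gs ! i) xs (ys ! i))
          \<Longrightarrow> eval f ys z \<Longrightarrow> eval (Comp f gs) xs z"
| prim0: "eval f xs y \<Longrightarrow> eval (Prim f g) (0 # xs) y"
| primS: "eval (Prim f g) (n # xs) y \<Longrightarrow> eval g (n # y # xs) z
          \<Longrightarrow> eval (Prim f g) (Suc n # xs) z"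
| mn: "eval f (n # xs) 0 \<Longrightarrow> (\<forall>m < n. \<exists>y. eval f (m # xs) (Suc y))
          \<Longrightarrow> eval (Mn f) xs n"

definition ce :: "nat set \<Rightarrow> bool" where
  "ce A \<longleftrightarrow> (\<exists>c. A = {x. \<exists>y. eval c [x] y})"

datatype sent = Eq nat nat | Lt nat nat

type_synonym lit = "bool \<times> sent"   \<comment> \<open>(True, s) = s, (False, s) = negation of s\<close>

fun sent_code :: "sent \<Rightarrow> nat" where
  "sent_code (Eq a b) = prod_encode (0, prod_encode (a, b))"
| "sent_code (Lt a b) = prod_encode (1, prod_encode (a, b))"

definition lit_code :: "lit \<Rightarrow> nat" where
  "lit_code l = prod_encode (if fst l then 1 else 0, sent_code (snd l))"

definition enum_op :: "(lit set \<times> lit) set \<Rightarrow> bool" where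
  "enum_op \<Gamma> \<longleftrightarrow> (\<forall>p\<in>\<Gamma>. finite (fst p)) \<and>
     ce {prod_encode (set_encode (lit_code ` \<alpha>), lit_code \<phi>) | \<alpha> \<phi>. (\<alpha>, \<phi>) \<in> \<Gamma>}"

definition enum_apply :: "(lit set \<times> lit) set \<Rightarrow> lit set \<Rightarrow> lit set" where
  "enum_apply \<Gamma> X = {\<phi>. \<exists>\<alpha>. (\<alpha>, \<phi>) \<in> \<Gamma> \<and> \<alpha> \<subseteq> X}"

type_synonym 'a lo = "'a set \<times> 'a rel"

definition is_lo :: "'a lo \<Rightarrow> bool" where
  "is_lo L \<longleftrightarrow> snd L \<subseteq> fst L \<times> fst L \<and> (\<forall>x\<in>fst L. (x, x) \<notin> snd L) \<and> trans (snd L)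
     \<and> (\<forall>x\<in>fst L. \<forall>y\<in>fst L. x \<noteq> y \<longrightarrow> (x, y) \<in> snd L \<or> (y, x) \<in> snd L)"

definition lo_iso :: "'a lo \<Rightarrow> 'b lo \<Rightarrow> bool" where
  "lo_iso L M \<longleftrightarrow> (\<exists>f. bij_betw f (fst L) (fst M) \<and>
     (\<forall>x\<in>fst L. \<forall>y\<in>fst L. (x, y) \<in> snd L \<longleftrightarrow> (f x, f y) \<in> snd M))"

definition diag :: "nat lo \<Rightarrow> lit set" where
  "diag L = {(True, Eq a a) | a. a \<in> fst L}
          \<union> {(False, Eq a b) | a b. a \<in> fst L \<and> b \<in> fst L \<and> a \<noteq> b}
          \<union> {(True, Lt a b) | a b. a \<in> fst L \<and> b \<in> fst L \<and> (a, b) \<in> snd L}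
          \<union> {(False, Lt a b) | a b. a \<in> fst L \<and> b \<in> fst L \<and> (a, b) \<notin> snd L}"

definition cls2 :: "'a lo \<Rightarrow> 'a lo \<Rightarrow> nat lo set" where
  "cls2 A B = {L. is_lo L \<and> (lo_iso L A \<or> lo_iso L B)}"

definition comp_emb :: "nat lo set \<Rightarrow> nat lo set \<Rightarrow> bool" (infix "\<le>\<^sub>c" 50) where
  "K0 \<le>\<^sub>c K1 \<longleftrightarrow> (\<exists>\<Gamma>. enum_op \<Gamma> \<and>
     (\<forall>A\<in>K0. \<exists>B\<in>K1. enum_apply \<Gamma> (diag A) = diag B) \<and>
     (\<forall>A\<in>K0. \<forall>A'\<in>K0. \<forall>B\<in>K1. \<forall>B'\<in>K1.
        enum_apply \<Gamma> (diag A) = diag B \<longrightarrow> enum_apply \<Gamma> (diag A') = diag B' \<longrightarrow>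
        (lo_iso A A' \<longleftrightarrow> lo_iso B B')))"

definition omega :: "nat lo" where
  "omega = (UNIV, {(a, b). a < b})"

definition fin_ord :: "nat \<Rightarrow> nat lo" where
  "fin_ord n = ({..<n}, {(a, b). a < b \<and> b < n})"

definition lo_rev :: "'a lo \<Rightarrow> 'a lo" where
  "lo_rev L = (fst L, (snd L)\<inverse>)"

text \<open>Ordinal-style product: L \<cdot> M is M copies of L (lexicographic, M-coordinate first).\<close>
definition lo_mult :: "'a lo \<Rightarrow> 'b lo \<Rightarrow> ('b \<times> 'a) lo" where
  "lo_mult L M = (fst M \<times> fst L,
     {((m, l), (m', l')). m \<in> fst M \<and> m' \<in> fst M \<and> l \<in> fst L \<and> l' \<in> fst L \<and>
        ((m, m') \<in> snd M \<or> (m = m' \<and> (l, l') \<in> snd L))})"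

end

theory Submission
  imports Defs "HOL-Library.Infinite_Set"
begin

inductive_cases evalZeroE: "eval Zero xs y"
inductive_cases evalSuccE: "eval Succ xs y"
inductive_cases evalProjE: "eval (Proj i) xs y"
inductive_cases evalCompE: "eval (Comp f gs) xs y"
inductive_cases evalPrim0E: "eval (Prim f g) (0 # xs) y"
inductive_cases evalPrimSE: "eval (Prim f g) (Suc n # xs) y"
inductive_cases evalMnE: "eval (Mn f) xs y"

lemma eval_det_aux: "eval c xs y \<Longrightarrow> \<forall>y'. eval c xs y' \<longrightarrow> y = y'"
proof (induction rule: eval.induct)
  case (zero xs)
  show ?case
  proof (intro allI impI)
    fix y' assume a: "eval Zero xs y'"
    show "0 = y'" using a by (rule evalZeroE) simp
  qed
next
  case (succ x xs)
  show ?case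
  proof (intro allI impI)
    fix y' assume a: "eval Succ (x # xs) y'"
    show "Suc x = y'" using a by (rule evalSuccE) simp
  qed
next
  case (proj i xs)
  show ?case
  proof (intro allI impI)
    fix y' assume a: "eval (Proj i) xs y'"
    show "xs ! i = y'" using a by (rule evalProjE) simp
  qed
next
  case (comp ys gs xs f z)
  show ?case
  proof (intro allI impI)
    fix y' assume "eval (Comp f gs) xs y'"
    then obtain ys' where l: "length ys' = length gs"
      and a: "\<forall>i<length gs. eval (gs ! i) xs (ys' ! i)" and b: "eval f ys' y'"
      by (rule evalCompE) blast
    have "ys = ys'"
    proof (rule nth_equalityI)
      show "length ys = length ys'" using comp.hyps l by simp
      fix i assume "i < length ys"
      then have i: "i < length gs" using comp.hyps by simp
      then have "eval (gs ! i) xs (ys' ! i)" using a by blast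
      moreover have "\<forall>y'. eval (gs ! i) xs y' \<longrightarrow> ys ! i = y'" using comp.IH(1) i by simp
      ultimately show "ys ! i = ys' ! i" by simp
    qed
    then show "z = y'" using comp.IH b by simp
  qed
next
  case (prim0 f xs y g)
  show ?case
  proof (intro allI impI)
    fix y' assume a: "eval (Prim f g) (0 # xs) y'"
    show "y = y'" using a by (rule evalPrim0E) (use prim0.IH in simp)
  qed
next
  case (primS f g n xs y z)
  show ?case
  proof (intro allI impI)
    fix y' assume "eval (Prim f g) (Suc n # xs) y'"
    then obtain y2 where "eval (Prim f g) (n # xs) y2" "eval g (n # y2 # xs) y'"
      by (rule evalPrimSE) blast
    then show "z = y'" using primS.IH by simp
  qed
next
  case (mn f n xs)
  show ?case
  proof (intro allI impI)
    fix y' assume "eval (Mn f) xs y'"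
    then have a: "eval f (y' # xs) 0" and b: "\<forall>m < y'. \<exists>y. eval f (m # xs) (Suc y)"
      by (rule evalMnE, simp)+
    show "n = y'"
    proof (rule ccontr)
      assume "n \<noteq> y'"
      then have "n < y' \<or> y' < n" by auto
      then show False
      proof
        assume "n < y'" then obtain y where "eval f (n # xs) (Suc y)" using b by blast
        then show False using mn.IH(1) by fastforce
      next
        assume "y' < n" then obtain y where "eval f (y' # xs) (Suc y)"
          and "\<forall>y'a. eval f (y' # xs) y'a \<longrightarrow> Suc y = y'a" using mn.IH(2) by blast
        then show False using a by fastforce
      qed
    qed
  qed
qed

lemma eval_det: "eval c xs y \<Longrightarrow> eval c xs y' \<Longrightarrow> y = y'"
  using eval_det_aux by blast

lemma comp1: "eval g xs a \<Longrightarrow> eval f [a] z \<Longrightarrow> eval (Comp f [g]) xs z"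
  by (rule eval.comp[where ys="[a]"]) auto

lemma comp2: "eval g1 xs a \<Longrightarrow> eval g2 xs b \<Longrightarrow> eval f [a, b] z \<Longrightarrow> eval (Comp f [g1, g2]) xs z"
  by (rule eval.comp[where ys="[a, b]"]) (auto simp: less_Suc_eq nth_Cons')

lemma comp3: "eval g1 xs a \<Longrightarrow> eval g2 xs b \<Longrightarrow> eval g3 xs c \<Longrightarrow> eval f [a, b, c] z
   \<Longrightarrow> eval (Comp f [g1, g2, g3]) xs z"
  by (rule eval.comp[where ys="[a, b, c]"]) (auto simp: less_Suc_eq nth_Cons')

lemma proj0: "eval (Proj 0) (x # xs) x" using eval.proj[of 0 "x # xs"] by simp
lemma proj1: "eval (Proj 1) (x # y # xs) y" using eval.proj[of 1 "x # y # xs"] by simp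
lemma proj3: "eval (Proj 3) (a # b # c # d # xs) d" using eval.proj[of 3 "a # b # c # d # xs"] by (simp add: numeral_eq_Suc)

lemma eval_eq: "eval c xs y \<Longrightarrow> y = y' \<Longrightarrow> eval c xs y'" by simp

definition "ADDr = Prim (Proj 0) (Comp Succ [Proj 1])"
lemma ADDr: "eval ADDr [a, b] (a + b)"
proof (induction a)
  case 0 show ?case unfolding ADDr_def by (rule eval.prim0) (simp add: proj0)
next
  case (Suc a) show ?case unfolding ADDr_def
    by (rule eval.primS[OF Suc[unfolded ADDr_def]], rule eval_eq[OF comp1[OF proj1 eval.succ]]) simp
qed

definition "PREDr = Prim Zero (Proj 0)"
lemma PREDr: "eval PREDr [a] (a - 1)"
proof (induction a)
  case 0 then show ?case unfolding PREDr_def by (simp add: eval.prim0 eval.zero)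
next
  case (Suc a) show ?case unfolding PREDr_def
    by (rule eval.primS[OF Suc[unfolded PREDr_def]], rule eval_eq[OF proj0]) simp
qed

definition "SUBRr = Prim (Proj 0) (Comp PREDr [Proj 1])"
lemma SUBRr: "eval SUBRr [b, a] (a - b)"
proof (induction b)
  case 0 show ?case unfolding SUBRr_def by (rule eval.prim0) (simp add: proj0)
next
  case (Suc b) show ?case unfolding SUBRr_def
    by (rule eval.primS[OF Suc[unfolded SUBRr_def]], rule eval_eq[OF comp1[OF proj1 PREDr]]) simp
qed

definition "MONUSr = Comp SUBRr [Proj 1, Proj 0]"
lemma MONUSr: "eval MONUSr [a, b] (a - b)"
  unfolding MONUSr_def by (rule comp2[OF proj1 proj0 SUBRr])

definition "TRIr = Prim Zero (Comp ADDr [Proj 1, Comp Succ [Proj 0]])"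
lemma TRIr: "eval TRIr [k] (triangle k)"
proof (induction k)
  case 0 show ?case unfolding TRIr_def by (simp add: eval.prim0 eval.zero)
next
  case (Suc k) show ?case unfolding TRIr_def
    by (rule eval.primS[OF Suc[unfolded TRIr_def]],
        rule eval_eq[OF comp2[OF proj1 comp1[OF proj0 eval.succ] ADDr]]) simp
qed

definition "POW2r = Prim (Comp Succ [Zero]) (Comp ADDr [Proj 1, Proj 1])"
lemma POW2r: "eval POW2r [k] (2 ^ k)"
proof (induction k)
  case 0 show ?case unfolding POW2r_def
    by (rule eval.prim0, rule eval_eq[OF comp1[OF eval.zero eval.succ]]) simp
next
  case (Suc k) show ?case unfolding POW2r_def
    by (rule eval.primS[OF Suc[unfolded POW2r_def]], rule eval_eq[OF comp2[OF proj1 proj1 ADDr]]) simp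
qed

definition "PARr = Prim Zero (Comp MONUSr [Comp Succ [Zero], Proj 1])"
lemma PARr: "eval PARr [s] (s mod 2)"
proof (induction s)
  case 0 show ?case unfolding PARr_def by (simp add: eval.prim0 eval.zero)
next
  case (Suc s)
  have "Suc 0 - s mod 2 = Suc s mod 2" by presburger
  then show ?case unfolding PARr_def
    by (rule eval_eq[OF eval.primS[OF Suc[unfolded PARr_def]
        comp2[OF comp1[OF eval.zero eval.succ] proj1 MONUSr]]])
qed

definition "HALFr = Prim Zero (Comp ADDr [Proj 1, Comp PARr [Proj 0]])"
lemma HALFr: "eval HALFr [s] (s div 2)"
proof (induction s)
  case 0 show ?case unfolding HALFr_def by (simp add: eval.prim0 eval.zero)
next
  case (Suc s)
  have "s div 2 + s mod 2 = Suc s div 2" by presburger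
  then show ?case unfolding HALFr_def
    by (rule eval_eq[OF eval.primS[OF Suc[unfolded HALFr_def]
        comp2[OF proj1 comp1[OF proj0 PARr] ADDr]]])
qed

definition "SHRr = Prim (Proj 0) (Comp HALFr [Proj 1])"
lemma SHRr: "eval SHRr [a, s] (s div 2 ^ a)"
proof (induction a)
  case 0 show ?case unfolding SHRr_def by (rule eval.prim0) (simp add: proj0)
next
  case (Suc a)
  have "s div 2 ^ a div 2 = s div 2 ^ Suc a" by (metis div_mult2_eq power_Suc2)
  then show ?case unfolding SHRr_def
    by (rule eval_eq[OF eval.primS[OF Suc[unfolded SHRr_def] comp1[OF proj1 HALFr]]])
qed

definition "IFZr = Prim (Proj 0) (Proj 3)"
lemma IFZr: "eval IFZr [c, x, y] (if c = 0 then x else y)"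
proof (cases c)
  case 0 then show ?thesis unfolding IFZr_def by (simp add: eval.prim0 proj0)
next
  case (Suc d)
  have "eval (Prim (Proj 0) (Proj 3)) (d # [x, y]) (if d = 0 then x else y)"
  proof (induction d)
    case 0 then show ?case by (simp add: eval.prim0 proj0)
  next
    case (Suc d) then show ?case by (rule eval.primS) (simp add: proj3)
  qed
  then show ?thesis unfolding IFZr_def Suc by (simp, rule eval.primS) (rule proj3)
qed

definition root :: "nat \<Rightarrow> nat" where "root t = (LEAST k. t < triangle (Suc k))"

lemma triangle_ge: "n \<le> triangle n" by (induction n) auto

lemma root_ex: "t < triangle (Suc (root t))"
  unfolding root_def by (rule LeastI[of _ t]) (use triangle_ge[of "Suc t"] in simp)

lemma root_min: "m < root t \<Longrightarrow> \<not> t < triangle (Suc m)"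
  unfolding root_def by (rule not_less_Least)

definition "ROOTr = Mn (Comp MONUSr [Comp Succ [Proj 1], Comp TRIr [Comp Succ [Proj 0]]])"
lemma ROOTr: "eval ROOTr [t] (root t)"
proof -
  have e: "eval (Comp MONUSr [Comp Succ [Proj 1], Comp TRIr [Comp Succ [Proj 0]]]) [k, t]
      (Suc t - triangle (Suc k))" for k
    by (rule comp2[OF comp1[OF proj1 eval.succ] comp1[OF comp1[OF proj0 eval.succ] TRIr] MONUSr])
  show ?thesis unfolding ROOTr_def
  proof (rule eval.mn)
    show "eval (Comp MONUSr [Comp Succ [Proj 1], Comp TRIr [Comp Succ [Proj 0]]]) [root t, t] 0"
      using e[of "root t"] root_ex[of t] by simp
    show "\<forall>m<root t. \<exists>y. eval (Comp MONUSr [Comp Succ [Proj 1], Comp TRIr [Comp Succ [Proj 0]]]) (m # [t]) (Suc y)"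
    proof (intro allI impI)
      fix m assume "m < root t"
      then have "\<not> t < triangle (Suc m)" by (rule root_min)
      then have "Suc t - triangle (Suc m) = Suc (t - triangle (Suc m))" by simp
      then show "\<exists>y. eval (Comp MONUSr [Comp Succ [Proj 1], Comp TRIr [Comp Succ [Proj 0]]]) (m # [t]) (Suc y)"
        using e[of m] by metis
    qed
  qed
qed

fun Kr :: "nat \<Rightarrow> recf" where
  "Kr 0 = Zero"
| "Kr (Suc n) = Comp Succ [Kr n]"

lemma Kr: "eval (Kr n) xs n"
  by (induction n) (auto intro: eval.zero comp1[OF _ eval.succ])

datatype aexp = V nat | K nat | Add aexp aexp | Sub aexp aexp | Tri aexp | Pow2 aexp | Par aexp
  | Shr aexp aexp | Ifz aexp aexp aexp | Root aexp

fun aval :: "aexp \<Rightarrow> nat list \<Rightarrow> nat" where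
  "aval (V i) xs = xs ! i"
| "aval (K n) xs = n"
| "aval (Add a b) xs = aval a xs + aval b xs"
| "aval (Sub a b) xs = aval a xs - aval b xs"
| "aval (Tri a) xs = triangle (aval a xs)"
| "aval (Pow2 a) xs = 2 ^ aval a xs"
| "aval (Par a) xs = aval a xs mod 2"
| "aval (Shr a b) xs = aval b xs div 2 ^ aval a xs"
| "aval (Ifz a b c) xs = (if aval a xs = 0 then aval b xs else aval c xs)"
| "aval (Root a) xs = root (aval a xs)"

fun aok :: "nat \<Rightarrow> aexp \<Rightarrow> bool" where
  "aok k (V i) = (i < k)"
| "aok k (K n) = True"
| "aok k (Add a b) = (aok k a \<and> aok k b)"
| "aok k (Sub a b) = (aok k a \<and> aok k b)"
| "aok k (Tri a) = aok k a"
| "aok k (Pow2 a) = aok k a"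
| "aok k (Par a) = aok k a"
| "aok k (Shr a b) = (aok k a \<and> aok k b)"
| "aok k (Ifz a b c) = (aok k a \<and> aok k b \<and> aok k c)"
| "aok k (Root a) = aok k a"

fun acomp :: "aexp \<Rightarrow> recf" where
  "acomp (V i) = Proj i"
| "acomp (K n) = Kr n"
| "acomp (Add a b) = Comp ADDr [acomp a, acomp b]"
| "acomp (Sub a b) = Comp MONUSr [acomp a, acomp b]"
| "acomp (Tri a) = Comp TRIr [acomp a]"
| "acomp (Pow2 a) = Comp POW2r [acomp a]"
| "acomp (Par a) = Comp PARr [acomp a]"
| "acomp (Shr a b) = Comp SHRr [acomp a, acomp b]"
| "acomp (Ifz a b c) = Comp IFZr [acomp a, acomp b, acomp c]"
| "acomp (Root a) = Comp ROOTr [acomp a]"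

lemma acomp_correct: "aok (length xs) e \<Longrightarrow> eval (acomp e) xs (aval e xs)"
proof (induction e)
  case (V i) then show ?case by (simp add: eval.proj)
next
  case (K n) then show ?case by (simp add: Kr)
next
  case (Add a b) then show ?case by (auto intro: comp2[OF _ _ ADDr])
next
  case (Sub a b) then show ?case by (auto intro: comp2[OF _ _ MONUSr])
next
  case (Tri a) then show ?case by (auto intro: comp1[OF _ TRIr])
next
  case (Pow2 a) then show ?case by (auto intro: comp1[OF _ POW2r])
next
  case (Par a) then show ?case by (auto intro: comp1[OF _ PARr])
next
  case (Shr a b) then show ?case by (auto intro: comp2[OF _ _ SHRr])
next
  case (Ifz a b c) then show ?case by (simp only: acomp.simps aval.simps aok.simps) (rule comp3[OF _ _ _ IFZr], auto)
next
  case (Root a) then show ?case by (auto intro: comp1[OF _ ROOTr])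
qed

lemma aok_mono: "aok k e \<Longrightarrow> k \<le> k' \<Longrightarrow> aok k' e"
  by (induction e) auto

definition "EQx a b = Add (Sub a b) (Sub b a)"
lemma aval_EQx: "aval (EQx a b) xs = 0 \<longleftrightarrow> aval a xs = aval b xs"
  unfolding EQx_def by auto
lemma aok_EQx: "aok k (EQx a b) = (aok k a \<and> aok k b)"
  unfolding EQx_def by auto

lemma ce_range:
  assumes "aok 1 G"
  shows "ce (range (\<lambda>t. aval G [t]))"
proof -
  define F where "F = EQx G (V 1)"
  have okF: "aok 2 F" unfolding F_def aok_EQx using aok_mono[OF assms] by simp
  have evF: "eval (acomp F) [m, z] (aval F [m, z])" for m z
    by (rule acomp_correct) (use okF in \<open>simp add: numeral_2_eq_2\<close>)
  have F0: "aval F [m, z] = 0 \<longleftrightarrow> aval G [m] = z" for m z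
  proof -
    have "aval G [m, z] = aval G [m]"
    proof -
      have "aok 1 G \<Longrightarrow> aval G (m # ys) = aval G [m]" for ys
        by (induction G) auto
      then show ?thesis using assms by blast
    qed
    then show ?thesis unfolding F_def aval_EQx by simp
  qed
  have "range (\<lambda>t. aval G [t]) = {z. \<exists>y. eval (Mn (acomp F)) [z] y}"
  proof (intro set_eqI iffI)
    fix z assume "z \<in> range (\<lambda>t. aval G [t])"
    then obtain t0 where t0: "aval G [t0] = z" by auto
    define t where "t = (LEAST t. aval G [t] = z)"
    have tz: "aval G [t] = z" unfolding t_def by (rule LeastI[of _ t0]) (rule t0)
    have "eval (Mn (acomp F)) [z] t"
    proof (rule eval.mn)
      show "eval (acomp F) (t # [z]) 0" using evF[of t z] F0[of t z] tz by simp
      show "\<forall>m<t. \<exists>y. eval (acomp F) (m # [z]) (Suc y)"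
      proof (intro allI impI)
        fix m assume "m < t"
        then have "aval G [m] \<noteq> z" unfolding t_def by (rule not_less_Least)
        then have "aval F [m, z] \<noteq> 0" using F0 by simp
        then obtain y where "aval F [m, z] = Suc y" using not0_implies_Suc by blast
        then show "\<exists>y. eval (acomp F) (m # [z]) (Suc y)" using evF[of m z] by metis
      qed
    qed
    then show "z \<in> {z. \<exists>y. eval (Mn (acomp F)) [z] y}" by blast
  next
    fix z assume "z \<in> {z. \<exists>y. eval (Mn (acomp F)) [z] y}"
    then obtain y where "eval (Mn (acomp F)) [z] y" by blast
    then have "eval (acomp F) (y # [z]) 0" by (rule evalMnE) simp
    then have "aval F [y, z] = 0" using eval_det[OF evF[of y z]] by simp
    then have "aval G [y] = z" using F0 by simp
    then show "z \<in> range (\<lambda>t. aval G [t])" by (metis rangeI)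
  qed
  then show ?thesis unfolding ce_def by blast
qed

definition dfst :: "nat \<Rightarrow> nat" where "dfst t = t - triangle (root t)"
definition dsnd :: "nat \<Rightarrow> nat" where "dsnd t = root t - dfst t"

lemma triangle_mono: "m \<le> n \<Longrightarrow> triangle m \<le> triangle n"
  by (induction n) (auto simp: le_Suc_eq)

lemma root_pe: "root (prod_encode (a, b)) = a + b"
proof -
  have pe: "prod_encode (a, b) = triangle (a + b) + a" by (simp add: prod_encode_def)
  show ?thesis unfolding root_def pe
  proof (rule Least_equality)
    show "triangle (a + b) + a < triangle (Suc (a + b))" by simp
    fix k assume "triangle (a + b) + a < triangle (Suc k)"
    then have "triangle (a + b) < triangle (Suc k)" by simp
    then show "a + b \<le> k" using triangle_mono[of "Suc k" "a + b"] by (cases "a + b \<le> k") auto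
  qed
qed

lemma dfst_pe[simp]: "dfst (prod_encode (a, b)) = a"
  unfolding dfst_def root_pe by (simp add: prod_encode_def)
lemma dsnd_pe[simp]: "dsnd (prod_encode (a, b)) = b"
  unfolding dsnd_def root_pe dfst_pe by simp

definition "FSTx e = Sub e (Tri (Root e))"
definition "SNDx e = Sub (Root e) (FSTx e)"
definition "PEx a b = Add (Tri (Add a b)) a"
definition "LEx a b = Sub a b"
definition "LTx a b = Sub (Add a (K 1)) b"
definition "ORx a b = Ifz a (K 0) b"
definition "NOTx a = Ifz a (K 1) (K 0)"
definition "INSx a s = Ifz (Par (Shr a s)) (Add (Pow2 a) s) s"

lemma aval_FSTx[simp]: "aval (FSTx e) xs = dfst (aval e xs)" unfolding FSTx_def dfst_def by simp
lemma aval_SNDx[simp]: "aval (SNDx e) xs = dsnd (aval e xs)" unfolding SNDx_def dsnd_def by simp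
lemma aval_PEx[simp]: "aval (PEx a b) xs = prod_encode (aval a xs, aval b xs)"
  unfolding PEx_def by (simp add: prod_encode_def)
lemma aval_LEx[simp]: "aval (LEx a b) xs = 0 \<longleftrightarrow> aval a xs \<le> aval b xs" unfolding LEx_def by simp
lemma aval_LTx[simp]: "aval (LTx a b) xs = 0 \<longleftrightarrow> aval a xs < aval b xs" unfolding LTx_def by auto
lemma aval_ORx[simp]: "aval (ORx a b) xs = 0 \<longleftrightarrow> aval a xs = 0 \<or> aval b xs = 0" unfolding ORx_def by simp
lemma aval_NOTx[simp]: "aval (NOTx a) xs = 0 \<longleftrightarrow> aval a xs \<noteq> 0" unfolding NOTx_def by simp
lemma aval_Add0: "aval (Add a b) xs = 0 \<longleftrightarrow> aval a xs = 0 \<and> aval b xs = 0" by simp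

definition ins :: "nat \<Rightarrow> nat \<Rightarrow> nat" where
  "ins a s = (if (s div 2 ^ a) mod 2 = 0 then 2 ^ a + s else s)"
lemma aval_INSx[simp]: "aval (INSx a s) xs = ins (aval a xs) (aval s xs)"
  unfolding INSx_def ins_def by simp

lemma aok_builders[simp]:
  "aok k (FSTx e) = aok k e" "aok k (SNDx e) = aok k e" "aok k (PEx a b) = (aok k a \<and> aok k b)"
  "aok k (LEx a b) = (aok k a \<and> aok k b)" "aok k (LTx a b) = (aok k a \<and> aok k b)"
  "aok k (ORx a b) = (aok k a \<and> aok k b)" "aok k (NOTx a) = aok k a"
  "aok k (INSx a b) = (aok k a \<and> aok k b)" "aok k (EQx a b) = (aok k a \<and> aok k b)"
  unfolding FSTx_def SNDx_def PEx_def LEx_def LTx_def ORx_def NOTx_def INSx_def EQx_def by auto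

lemma set_encode_set: "set_encode (set L) = foldr ins L 0"
proof (induction L)
  case Nil then show ?case by simp
next
  case (Cons a L)
  have "a \<in> set L \<longleftrightarrow> a \<in> set_decode (set_encode (set L))" by simp
  also have "\<dots> \<longleftrightarrow> odd (set_encode (set L) div 2 ^ a)" unfolding set_decode_def by simp
  finally have m: "a \<in> set L \<longleftrightarrow> odd (set_encode (set L) div 2 ^ a)" .
  show ?case
  proof (cases "a \<in> set L")
    case True
    then have "odd (set_encode (set L) div 2 ^ a)" using m by simp
    then have "ins a (set_encode (set L)) = set_encode (set L)" unfolding ins_def by presburger
    then show ?thesis using True Cons by (simp add: insert_absorb)
  next
    case False
    then have "even (set_encode (set L) div 2 ^ a)" using m by simp
    then have "ins a (set_encode (set L)) = 2 ^ a + set_encode (set L)" unfolding ins_def by presburger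
    then show ?thesis using False Cons by simp
  qed
qed

definition Cl :: "nat \<Rightarrow> nat \<Rightarrow> nat \<Rightarrow> lit list" where
  "Cl w x v = [(False, Lt x w), (False, Lt v x)]"
definition olit :: "nat \<Rightarrow> nat \<Rightarrow> nat \<Rightarrow> nat \<Rightarrow> nat \<Rightarrow> lit" where
  "olit k x x' w w' = (if k = 1 then (True, Lt x x') else if k = 2 then (True, Lt w w') else (False, Lt x w))"
definition enc3 :: "nat \<Rightarrow> nat \<Rightarrow> nat \<Rightarrow> nat" where
  "enc3 i w x = prod_encode (i, prod_encode (w, x))"
definition phi :: "nat \<Rightarrow> nat \<Rightarrow> nat \<Rightarrow> lit" where
  "phi tag e e' = (if tag = 0 then (True, Eq e e) else if tag = 1 then (False, Lt e e)
     else if tag = 2 then (False, Eq e e') else if tag = 3 then (True, Lt e e') else (False, Lt e' e))"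
definition alist :: "nat \<Rightarrow> nat \<Rightarrow> nat \<Rightarrow> nat \<Rightarrow> nat \<Rightarrow> nat \<Rightarrow> nat \<Rightarrow> lit list" where
  "alist w x v w' x' v' k = Cl w x v @ Cl w' x' v' @ [olit k x x' w w']"
definition valid :: "nat \<Rightarrow> nat \<Rightarrow> nat \<Rightarrow> nat \<Rightarrow> nat \<Rightarrow> nat \<Rightarrow> nat \<Rightarrow> nat \<Rightarrow> nat \<Rightarrow> nat \<Rightarrow> nat \<Rightarrow> bool" where
  "valid n tag i w x v i' w' x' v' k \<longleftrightarrow> tag \<le> 4 \<and> i < n \<and> i' < n \<and> w \<le> v \<and> w' \<le> v' \<and>
     (tag = 2 \<longrightarrow> (i, w, x) \<noteq> (i', w', x')) \<and>
     (3 \<le> tag \<longrightarrow> ((k = 0 \<and> i < i') \<or> (k = 1 \<and> i = i') \<or> (k = 2 \<and> i = i' \<and> x = x')))"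

definition Gam :: "nat \<Rightarrow> (lit set \<times> lit) set" where
  "Gam n = {(set (alist w x v w' x' v' k), phi tag (enc3 i w x) (enc3 i' w' x')) | tag i w x v i' w' x' v' k.
      valid n tag i w x v i' w' x' v' k}"

definition codeF :: "nat \<Rightarrow> nat \<Rightarrow> nat \<Rightarrow> nat \<Rightarrow> nat \<Rightarrow> nat \<Rightarrow> nat \<Rightarrow> nat \<Rightarrow> nat \<Rightarrow> nat \<Rightarrow> nat" where
  "codeF tag i w x v i' w' x' v' k = prod_encode (set_encode (lit_code ` set (alist w x v w' x' v' k)),
      lit_code (phi tag (enc3 i w x) (enc3 i' w' x')))"

lemma codes_Gam: "{prod_encode (set_encode (lit_code ` \<alpha>), lit_code \<phi>) | \<alpha> \<phi>. (\<alpha>, \<phi>) \<in> Gam n}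
  = {codeF tag i w x v i' w' x' v' k | tag i w x v i' w' x' v' k. valid n tag i w x v i' w' x' v' k}"
  unfolding Gam_def codeF_def by blast

definition "LITx (b::nat) (s::nat) a c = PEx (K b) (PEx (K s) (PEx a c))"
lemma lit_code_Eq: "lit_code (b, Eq a c) = prod_encode (if b then 1 else 0, prod_encode (0, prod_encode (a, c)))"
  unfolding lit_code_def by simp
lemma lit_code_Lt: "lit_code (b, Lt a c) = prod_encode (if b then 1 else 0, prod_encode (1, prod_encode (a, c)))"
  unfolding lit_code_def by simp
lemma aval_LITx[simp]: "aval (LITx b s a c) xs = prod_encode (b, prod_encode (s, prod_encode (aval a xs, aval c xs)))"
  unfolding LITx_def by simp

definition "OLITx k x x' w w' = Ifz (EQx k (K 1)) (LITx 1 1 x x') (Ifz (EQx k (K 2)) (LITx 1 1 w w') (LITx 0 1 x w))"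
lemma aval_OLITx[simp]: "aval (OLITx k x x' w w') xs = lit_code (olit (aval k xs) (aval x xs) (aval x' xs) (aval w xs) (aval w' xs))"
  unfolding OLITx_def olit_def by (simp add: aval_EQx lit_code_Lt)

definition "PHIx tag e e' = Ifz (EQx tag (K 0)) (LITx 1 0 e e) (Ifz (EQx tag (K 1)) (LITx 0 1 e e)
   (Ifz (EQx tag (K 2)) (LITx 0 0 e e') (Ifz (EQx tag (K 3)) (LITx 1 1 e e') (LITx 0 1 e' e))))"
lemma aval_PHIx[simp]: "aval (PHIx tag e e') xs = lit_code (phi (aval tag xs) (aval e xs) (aval e' xs))"
  unfolding PHIx_def phi_def by (simp add: aval_EQx lit_code_Lt lit_code_Eq)

definition "E3x i w x = PEx i (PEx w x)"
lemma aval_E3x[simp]: "aval (E3x i w x) xs = enc3 (aval i xs) (aval w xs) (aval x xs)"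
  unfolding E3x_def enc3_def by simp

definition "CODEx tag i w x v i' w' x' v' k = PEx
   (INSx (LITx 0 1 x w) (INSx (LITx 0 1 v x) (INSx (LITx 0 1 x' w') (INSx (LITx 0 1 v' x') (INSx (OLITx k x x' w w') (K 0))))))
   (PHIx tag (E3x i w x) (E3x i' w' x'))"

lemma aval_CODEx[simp]: "aval (CODEx tag i w x v i' w' x' v' k) xs =
  codeF (aval tag xs) (aval i xs) (aval w xs) (aval x xs) (aval v xs) (aval i' xs) (aval w' xs) (aval x' xs) (aval v' xs) (aval k xs)"
proof -
  have e: "set_encode (lit_code ` set L) = foldr ins (map lit_code L) 0" for L
    by (simp only: image_set set_encode_set)
  show ?thesis
    unfolding CODEx_def codeF_def e alist_def Cl_def
    by (simp add: lit_code_Lt)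
qed

definition "VALx n tag i w x v i' w' x' v' k =
  Add (LEx tag (K 4)) (Add (LTx i (K n)) (Add (LTx i' (K n)) (Add (LEx w v) (Add (LEx w' v')
  (Add (ORx (NOTx (EQx tag (K 2))) (NOTx (Add (EQx i i') (Add (EQx w w') (EQx x x')))))
       (ORx (LTx tag (K 3)) (ORx (Add (EQx k (K 0)) (LTx i i')) (ORx (Add (EQx k (K 1)) (EQx i i'))
          (Add (EQx k (K 2)) (Add (EQx i i') (EQx x x')))))))))))"

lemma aval_VALx: "aval (VALx n tag i w x v i' w' x' v' k) xs = 0 \<longleftrightarrow>
  valid n (aval tag xs) (aval i xs) (aval w xs) (aval x xs) (aval v xs) (aval i' xs) (aval w' xs) (aval x' xs) (aval v' xs) (aval k xs)"
  unfolding VALx_def valid_def by (simp add: aval_EQx del: aval.simps(3) add: aval_Add0) (auto simp: aval_EQx)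

lemma aok_builders2[simp]:
  "aok j (LITx b s a c) = (aok j a \<and> aok j c)"
  "aok j (OLITx k x x' w w') = (aok j k \<and> aok j x \<and> aok j x' \<and> aok j w \<and> aok j w')"
  "aok j (PHIx tag e e') = (aok j tag \<and> aok j e \<and> aok j e')"
  "aok j (E3x i w x) = (aok j i \<and> aok j w \<and> aok j x)"
  unfolding LITx_def OLITx_def PHIx_def E3x_def by auto

lemma aok_CODEx: "aok j tag \<Longrightarrow> aok j i \<Longrightarrow> aok j w \<Longrightarrow> aok j x \<Longrightarrow> aok j v \<Longrightarrow> aok j i' \<Longrightarrow> aok j w'
  \<Longrightarrow> aok j x' \<Longrightarrow> aok j v' \<Longrightarrow> aok j k \<Longrightarrow> aok j (CODEx tag i w x v i' w' x' v' k)"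
  unfolding CODEx_def by simp
lemma aok_VALx: "aok j tag \<Longrightarrow> aok j i \<Longrightarrow> aok j w \<Longrightarrow> aok j x \<Longrightarrow> aok j v \<Longrightarrow> aok j i' \<Longrightarrow> aok j w'
  \<Longrightarrow> aok j x' \<Longrightarrow> aok j v' \<Longrightarrow> aok j k \<Longrightarrow> aok j (VALx n tag i w x v i' w' x' v' k)"
  unfolding VALx_def by simp

fun Rx :: "nat \<Rightarrow> aexp" where
  "Rx 0 = V 0"
| "Rx (Suc j) = SNDx (Rx j)"

lemma aval_Rx[simp]: "aval (Rx j) [t] = (dsnd ^^ j) t" by (induction j) auto
lemma aok_Rx[simp]: "0 < k \<Longrightarrow> aok k (Rx j)" by (induction j) auto

definition "Px j = FSTx (Rx j)"
lemma aval_Px[simp]: "aval (Px j) [t] = dfst ((dsnd ^^ j) t)" unfolding Px_def by simp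
lemma aok_Px[simp]: "0 < k \<Longrightarrow> aok k (Px j)" unfolding Px_def by simp

definition "Gx n = Ifz (VALx n (Px 0) (Px 1) (Px 2) (Px 3) (Px 4) (Px 5) (Px 6) (Px 7) (Px 8) (Rx 9))
   (CODEx (Px 0) (Px 1) (Px 2) (Px 3) (Px 4) (Px 5) (Px 6) (Px 7) (Px 8) (Rx 9))
   (CODEx (K 0) (K 0) (K 0) (K 0) (K 0) (K 0) (K 0) (K 0) (K 0) (K 0))"

lemma aok_Gx: "aok 1 (Gx n)"
  unfolding Gx_def by (simp add: aok_CODEx aok_VALx)

lemma range_Gx:
  assumes "1 \<le> n"
  shows "range (\<lambda>t. aval (Gx n) [t]) =
    {codeF tag i w x v i' w' x' v' k | tag i w x v i' w' x' v' k. valid n tag i w x v i' w' x' v' k}"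
proof (intro set_eqI iffI)
  fix z assume "z \<in> range (\<lambda>t. aval (Gx n) [t])"
  then obtain t where z: "z = aval (Gx n) [t]" by blast
  have v0: "valid n 0 0 0 0 0 0 0 0 0 0" using assms unfolding valid_def by simp
  show "z \<in> {codeF tag i w x v i' w' x' v' k | tag i w x v i' w' x' v' k. valid n tag i w x v i' w' x' v' k}"
  proof (cases "aval (VALx n (Px 0) (Px 1) (Px 2) (Px 3) (Px 4) (Px 5) (Px 6) (Px 7) (Px 8) (Rx 9)) [t] = 0")
    case True
    then show ?thesis unfolding z Gx_def aval.simps(9) if_P[OF True] aval_CODEx
      by (unfold aval_VALx) blast
  next
    case False
    then show ?thesis unfolding z Gx_def aval.simps(9) if_not_P[OF False] aval_CODEx
      using v0 by (simp only: aval.simps) blast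
  qed
next
  fix z assume "z \<in> {codeF tag i w x v i' w' x' v' k | tag i w x v i' w' x' v' k. valid n tag i w x v i' w' x' v' k}"
  then obtain tag i w x v i' w' x' v' k where z: "z = codeF tag i w x v i' w' x' v' k"
    and va: "valid n tag i w x v i' w' x' v' k" by blast
  define t where "t = prod_encode (tag, prod_encode (i, prod_encode (w, prod_encode (x, prod_encode (v,
     prod_encode (i', prod_encode (w', prod_encode (x', prod_encode (v', k)))))))))"
  have "aval (Gx n) [t] = z"
    unfolding Gx_def aval.simps(9) aval_VALx aval_CODEx
    by (simp add: t_def numeral_eq_Suc va z)
  then show "z \<in> range (\<lambda>t. aval (Gx n) [t])" by (metis rangeI)
qed

lemma enum_op_Gam:
  assumes "1 \<le> n"
  shows "enum_op (Gam n)"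
  unfolding enum_op_def
proof
  show "\<forall>p\<in>Gam n. finite (fst p)" unfolding Gam_def by auto
  show "ce {prod_encode (set_encode (lit_code ` \<alpha>), lit_code \<phi>) | \<alpha> \<phi>. (\<alpha>, \<phi>) \<in> Gam n}"
    unfolding codes_Gam range_Gx[OF assms, symmetric] by (rule ce_range[OF aok_Gx])
qed

lemma diag_TEq[simp]: "(True, Eq a b) \<in> diag L \<longleftrightarrow> a = b \<and> a \<in> fst L"
  unfolding diag_def by auto
lemma diag_FEq[simp]: "(False, Eq a b) \<in> diag L \<longleftrightarrow> a \<in> fst L \<and> b \<in> fst L \<and> a \<noteq> b"
  unfolding diag_def by auto
lemma diag_TLt[simp]: "(True, Lt a b) \<in> diag L \<longleftrightarrow> a \<in> fst L \<and> b \<in> fst L \<and> (a, b) \<in> snd L"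
  unfolding diag_def by auto
lemma diag_FLt[simp]: "(False, Lt a b) \<in> diag L \<longleftrightarrow> a \<in> fst L \<and> b \<in> fst L \<and> (a, b) \<notin> snd L"
  unfolding diag_def by auto

lemma diag_inj:
  assumes "is_lo B" "is_lo B'" "diag B = diag B'"
  shows "B = B'"
proof -
  have f: "fst B = fst B'"
  proof -
    have "a \<in> fst B \<longleftrightarrow> (True, Eq a a) \<in> diag B" for a B by simp
    then show ?thesis using assms(3) by blast
  qed
  have h: "(a, b) \<in> snd B \<longleftrightarrow> (True, Lt a b) \<in> diag B" if "is_lo B" for a b B
    using that unfolding is_lo_def by auto
  have "snd B = snd B'"
  proof (intro set_eqI)
    fix p show "p \<in> snd B \<longleftrightarrow> p \<in> snd B'"
      using h[OF assms(1), of "fst p" "snd p"] h[OF assms(2), of "fst p" "snd p"] assms(3) by simp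
  qed
  then show ?thesis using f by (simp add: prod_eq_iff)
qed

definition exs :: "nat lo \<Rightarrow> nat \<Rightarrow> nat \<Rightarrow> bool" where
  "exs A w x \<longleftrightarrow> w \<in> fst A \<and> x \<in> fst A \<and> (x, w) \<notin> snd A \<and> (\<exists>v\<in>fst A. (v, x) \<notin> snd A \<and> w \<le> v)"

definition EE :: "nat \<Rightarrow> nat lo \<Rightarrow> (nat \<times> nat \<times> nat) set" where
  "EE n A = {(i, w, x). i < n \<and> exs A w x}"

definition prec :: "nat lo \<Rightarrow> (nat \<times> nat \<times> nat) \<Rightarrow> (nat \<times> nat \<times> nat) \<Rightarrow> bool" where
  "prec A p q \<longleftrightarrow> (case p of (i, w, x) \<Rightarrow> case q of (i', w', x') \<Rightarrow>
     i < i' \<or> (i = i' \<and> ((x, x') \<in> snd A \<or> (x = x' \<and> (w, w') \<in> snd A))))"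

definition enc :: "nat \<times> nat \<times> nat \<Rightarrow> nat" where
  "enc p = (case p of (i, w, x) \<Rightarrow> enc3 i w x)"

lemma enc_inj[simp]: "enc p = enc q \<longleftrightarrow> p = q"
  unfolding enc_def enc3_def by (cases p, cases q) auto

definition outB :: "nat \<Rightarrow> nat lo \<Rightarrow> nat lo" where
  "outB n A = (enc ` EE n A, {(enc p, enc q) | p q. p \<in> EE n A \<and> q \<in> EE n A \<and> prec A p q})"

lemma prec_irrefl: "is_lo A \<Longrightarrow> p \<in> EE n A \<Longrightarrow> \<not> prec A p p"
  unfolding is_lo_def prec_def EE_def exs_def by auto

lemma prec_trans:
  assumes lo: "is_lo A" and pq: "prec A p q" and qs: "prec A q s" shows "prec A p s"
proof -
  obtain i w x j u y k t z where e: "p = (i, w, x)" "q = (j, u, y)" "s = (k, t, z)"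
    by (cases p, cases q, cases s) auto
  have T: "(a, b) \<in> snd A \<Longrightarrow> (b, c) \<in> snd A \<Longrightarrow> (a, c) \<in> snd A" for a b c
    using lo unfolding is_lo_def by (meson transD)
  show ?thesis using pq qs unfolding prec_def e by (auto intro: T)
qed

lemma prec_asym: "is_lo A \<Longrightarrow> p \<in> EE n A \<Longrightarrow> prec A p q \<Longrightarrow> \<not> prec A q p"
  using prec_irrefl prec_trans by blast

lemma prec_total: "is_lo A \<Longrightarrow> p \<in> EE n A \<Longrightarrow> q \<in> EE n A \<Longrightarrow> p \<noteq> q \<Longrightarrow> prec A p q \<or> prec A q p"
proof -
  assume lo: "is_lo A" and "p \<in> EE n A" "q \<in> EE n A" "p \<noteq> q"
  obtain i w x i' w' x' where pq: "p = (i, w, x)" "q = (i', w', x')" by (cases p, cases q) auto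
  have d: "w \<in> fst A" "x \<in> fst A" "w' \<in> fst A" "x' \<in> fst A"
    using \<open>p \<in> EE n A\<close> \<open>q \<in> EE n A\<close> pq unfolding EE_def exs_def by auto
  have tot: "\<And>a b. a \<in> fst A \<Longrightarrow> b \<in> fst A \<Longrightarrow> a \<noteq> b \<Longrightarrow> (a, b) \<in> snd A \<or> (b, a) \<in> snd A"
    using lo unfolding is_lo_def by blast
  show ?thesis
  proof (cases "i = i'")
    case False then show ?thesis unfolding pq prec_def by auto
  next
    case True
    show ?thesis
    proof (cases "x = x'")
      case False then show ?thesis using tot[OF d(2,4)] True unfolding pq prec_def by auto
    next
      case True2: True
      then have "w \<noteq> w'" using \<open>p \<noteq> q\<close> True pq by auto
      then show ?thesis using tot[OF d(1,3)] True True2 unfolding pq prec_def by auto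
    qed
  qed
qed

lemma outB_rel: "(enc p, enc q) \<in> snd (outB n A) \<longleftrightarrow> p \<in> EE n A \<and> q \<in> EE n A \<and> prec A p q"
proof
  assume "(enc p, enc q) \<in> snd (outB n A)"
  then obtain p' q' where "enc p = enc p'" "enc q = enc q'" "p' \<in> EE n A" "q' \<in> EE n A" "prec A p' q'"
    unfolding outB_def snd_conv mem_Collect_eq prod.inject by blast
  then show "p \<in> EE n A \<and> q \<in> EE n A \<and> prec A p q" by simp
next
  assume "p \<in> EE n A \<and> q \<in> EE n A \<and> prec A p q"
  then show "(enc p, enc q) \<in> snd (outB n A)" unfolding outB_def snd_conv mem_Collect_eq prod.inject by blast
qed

lemma outB_dom: "enc p \<in> fst (outB n A) \<longleftrightarrow> p \<in> EE n A"
  unfolding outB_def by auto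

lemma is_lo_outB:
  assumes "is_lo A"
  shows "is_lo (outB n A)"
  unfolding is_lo_def
proof (intro conjI ballI impI)
  show "snd (outB n A) \<subseteq> fst (outB n A) \<times> fst (outB n A)" unfolding outB_def by auto
  fix a assume "a \<in> fst (outB n A)"
  then obtain p where "a = enc p" "p \<in> EE n A" unfolding outB_def by auto
  then show "(a, a) \<notin> snd (outB n A)" using outB_rel prec_irrefl[OF assms] by auto
next
  show "trans (snd (outB n A))"
  proof (rule transI)
    fix a b c assume "(a, b) \<in> snd (outB n A)" "(b, c) \<in> snd (outB n A)"
    then obtain p q q' s where "a = enc p" "b = enc q" "b = enc q'" "c = enc s"
      "p \<in> EE n A" "q \<in> EE n A" "prec A p q" "q' \<in> EE n A" "s \<in> EE n A" "prec A q' s"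
      unfolding outB_def by auto
    then show "(a, c) \<in> snd (outB n A)" using outB_rel prec_trans[OF assms] by auto
  qed
next
  fix a b assume "a \<in> fst (outB n A)" "b \<in> fst (outB n A)" "a \<noteq> b"
  then obtain p q where "a = enc p" "b = enc q" "p \<in> EE n A" "q \<in> EE n A" "p \<noteq> q"
    unfolding outB_def by auto
  then show "(a, b) \<in> snd (outB n A) \<or> (b, a) \<in> snd (outB n A)"
    using outB_rel prec_total[OF assms] by metis
qed

lemma alist_sub: "set (alist w x v w' x' v' k) \<subseteq> D \<longleftrightarrow>
   (False, Lt x w) \<in> D \<and> (False, Lt v x) \<in> D \<and> (False, Lt x' w') \<in> D \<and> (False, Lt v' x') \<in> D
   \<and> olit k x x' w w' \<in> D"
  unfolding alist_def Cl_def by auto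

lemma Gam_mem: "(\<alpha>, \<phi>) \<in> Gam n \<longleftrightarrow> (\<exists>tag i w x v i' w' x' v' k. valid n tag i w x v i' w' x' v' k
   \<and> \<alpha> = set (alist w x v w' x' v' k) \<and> \<phi> = phi tag (enc3 i w x) (enc3 i' w' x'))"
  unfolding Gam_def by blast

lemma Gam_intro: "valid n tag i w x v i' w' x' v' k \<Longrightarrow>
   (set (alist w x v w' x' v' k), phi tag (enc3 i w x) (enc3 i' w' x')) \<in> Gam n"
  unfolding Gam_def by (rule CollectI, intro exI conjI, rule refl, assumption)

lemma enc_enc3: "enc (i, w, x) = enc3 i w x" unfolding enc_def by simp

lemma diag_out:
  assumes lo: "is_lo A"
  shows "enum_apply (Gam n) (diag A) = diag (outB n A)"
proof (intro set_eqI iffI)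
  fix \<phi> assume "\<phi> \<in> enum_apply (Gam n) (diag A)"
  then obtain \<alpha> where "(\<alpha>, \<phi>) \<in> Gam n" "\<alpha> \<subseteq> diag A" unfolding enum_apply_def by blast
  then obtain tag i w x v i' w' x' v' k where va: "valid n tag i w x v i' w' x' v' k"
    and al: "set (alist w x v w' x' v' k) \<subseteq> diag A" and ph: "\<phi> = phi tag (enc3 i w x) (enc3 i' w' x')"
    unfolding Gam_mem by blast
  have e1: "(i, w, x) \<in> EE n A" using va al unfolding alist_sub EE_def exs_def valid_def by auto
  have e2: "(i', w', x') \<in> EE n A" using va al unfolding alist_sub EE_def exs_def valid_def by auto
  note d1 = outB_dom[of "(i, w, x)", unfolded enc_enc3] and d2 = outB_dom[of "(i', w', x')", unfolded enc_enc3]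
  note r1 = outB_rel[of "(i, w, x)" "(i', w', x')", unfolded enc_enc3]
  note r2 = outB_rel[of "(i', w', x')" "(i, w, x)", unfolded enc_enc3]
  note r0 = outB_rel[of "(i, w, x)" "(i, w, x)", unfolded enc_enc3]
  have pr: "prec A (i, w, x) (i', w', x')" if "3 \<le> tag"
    using va al that unfolding valid_def alist_sub olit_def prec_def by auto
  consider "tag = 0" | "tag = 1" | "tag = 2" | "tag = 3" | "tag = 4" using va unfolding valid_def by linarith
  then show "\<phi> \<in> diag (outB n A)"
  proof cases
    case 1 then show ?thesis using ph d1 e1 unfolding phi_def by simp
  next
    case 2 then show ?thesis using ph d1 e1 r0 prec_irrefl[OF lo e1] unfolding phi_def by simp
  next
    case 3
    then have "(i, w, x) \<noteq> (i', w', x')" using va unfolding valid_def by simp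
    then have "enc3 i w x \<noteq> enc3 i' w' x'" using enc_inj[of "(i, w, x)" "(i', w', x')"] unfolding enc_enc3 by simp
    then show ?thesis using 3 ph d1 d2 e1 e2 unfolding phi_def by simp
  next
    case 4 then show ?thesis using ph d1 d2 e1 e2 r1 pr unfolding phi_def by simp
  next
    case 5 then show ?thesis using ph d1 d2 e1 e2 r2 pr prec_asym[OF lo e1] unfolding phi_def by simp
  qed
next
  fix \<phi> assume ph: "\<phi> \<in> diag (outB n A)"
  have exsv: "\<exists>v. (False, Lt x w) \<in> diag A \<and> (False, Lt v x) \<in> diag A \<and> w \<le> v" if "exs A w x" for w x
    using that unfolding exs_def by auto
  have key: "\<phi> \<in> enum_apply (Gam n) (diag A)" if "valid n tag i w x v i' w' x' v' k"
    "set (alist w x v w' x' v' k) \<subseteq> diag A" "\<phi> = phi tag (enc3 i w x) (enc3 i' w' x')"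
    for tag i w x v i' w' x' v' k
    unfolding enum_apply_def using that(2,3) Gam_intro[OF that(1)] by blast
  obtain b s where bs: "\<phi> = (b, s)" by (cases \<phi>)
  show "\<phi> \<in> enum_apply (Gam n) (diag A)"
  proof (cases s)
    case (Eq a c)
    show ?thesis
    proof (cases b)
      case True
      with ph bs Eq have "a = c" "a \<in> fst (outB n A)" by auto
      then obtain i w x where p: "a = enc3 i w x" "(i, w, x) \<in> EE n A" unfolding outB_def enc_def by auto
      then obtain v where v: "(False, Lt x w) \<in> diag A" "(False, Lt v x) \<in> diag A" "w \<le> v"
        using exsv unfolding EE_def by auto
      show ?thesis
        by (rule key[of 0 i w x v i w x v 0]) (use p v True bs Eq \<open>a = c\<close> in \<open>auto simp: valid_def alist_sub olit_def phi_def EE_def\<close>)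
    next
      case False
      with ph bs Eq have "a \<in> fst (outB n A)" "c \<in> fst (outB n A)" "a \<noteq> c" by auto
      then obtain i w x i' w' x' where p: "a = enc3 i w x" "(i, w, x) \<in> EE n A"
        "c = enc3 i' w' x'" "(i', w', x') \<in> EE n A" unfolding outB_def enc_def by auto
      obtain v where v: "(False, Lt x w) \<in> diag A" "(False, Lt v x) \<in> diag A" "w \<le> v"
        using exsv p unfolding EE_def by auto
      obtain v' where v': "(False, Lt x' w') \<in> diag A" "(False, Lt v' x') \<in> diag A" "w' \<le> v'"
        using exsv p unfolding EE_def by auto
      show ?thesis
        by (rule key[of 2 i w x v i' w' x' v' 0]) (use p v v' False bs Eq \<open>a \<noteq> c\<close> in \<open>auto simp: valid_def alist_sub olit_def phi_def EE_def\<close>)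
    qed
  next
    case (Lt a c)
    show ?thesis
    proof (cases b)
      case True
      with ph bs Lt have "(a, c) \<in> snd (outB n A)" by auto
      then obtain i w x i' w' x' where p: "a = enc3 i w x" "(i, w, x) \<in> EE n A"
        "c = enc3 i' w' x'" "(i', w', x') \<in> EE n A" "prec A (i, w, x) (i', w', x')"
        unfolding outB_def enc_def by auto
      obtain v where v: "(False, Lt x w) \<in> diag A" "(False, Lt v x) \<in> diag A" "w \<le> v"
        using exsv p unfolding EE_def by auto
      obtain v' where v': "(False, Lt x' w') \<in> diag A" "(False, Lt v' x') \<in> diag A" "w' \<le> v'"
        using exsv p unfolding EE_def by auto
      have xs: "x \<in> fst A" "x' \<in> fst A" "w \<in> fst A" "w' \<in> fst A" using v v' by auto
      consider "i < i'" | "i = i'" "(x, x') \<in> snd A" | "i = i'" "x = x'" "(w, w') \<in> snd A"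
        using p(5) unfolding prec_def by auto
      then show ?thesis
      proof cases
        case 1 show ?thesis
          by (rule key[of 3 i w x v i' w' x' v' 0]) (use p v v' True bs Lt 1 in \<open>auto simp: valid_def alist_sub olit_def phi_def EE_def\<close>)
      next
        case 2 show ?thesis
          by (rule key[of 3 i w x v i' w' x' v' 1]) (use p v v' True bs Lt 2 xs in \<open>auto simp: valid_def alist_sub olit_def phi_def EE_def\<close>)
      next
        case 3 show ?thesis
          by (rule key[of 3 i w x v i' w' x' v' 2]) (use p v v' True bs Lt 3 xs in \<open>auto simp: valid_def alist_sub olit_def phi_def EE_def\<close>)
      qed
    next
      case False
      with ph bs Lt have "a \<in> fst (outB n A)" "c \<in> fst (outB n A)" "(a, c) \<notin> snd (outB n A)" by auto
      then obtain i w x i' w' x' where p: "a = enc3 i w x" "(i, w, x) \<in> EE n A"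
        "c = enc3 i' w' x'" "(i', w', x') \<in> EE n A" and np: "\<not> prec A (i, w, x) (i', w', x')"
        unfolding outB_def enc_def by auto
      obtain v where v: "(False, Lt x w) \<in> diag A" "(False, Lt v x) \<in> diag A" "w \<le> v"
        using exsv p unfolding EE_def by auto
      obtain v' where v': "(False, Lt x' w') \<in> diag A" "(False, Lt v' x') \<in> diag A" "w' \<le> v'"
        using exsv p unfolding EE_def by auto
      have xs: "x \<in> fst A" "x' \<in> fst A" "w \<in> fst A" "w' \<in> fst A" using v v' by auto
      show ?thesis
      proof (cases "(i, w, x) = (i', w', x')")
        case True
        then show ?thesis
          by (intro key[of 1 i w x v i w x v 0]) (use p v False bs Lt True in \<open>auto simp: valid_def alist_sub olit_def phi_def EE_def\<close>)
      next
        case ne: False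
        then have pq: "prec A (i', w', x') (i, w, x)" using prec_total[OF lo p(2) p(4)] np by blast
        consider "i' < i" | "i' = i" "(x', x) \<in> snd A" | "i' = i" "x' = x" "(w', w) \<in> snd A"
          using pq unfolding prec_def by auto
        then show ?thesis
        proof cases
          case 1 show ?thesis
            by (rule key[of 4 i' w' x' v' i w x v 0]) (use p v v' False bs Lt 1 in \<open>auto simp: valid_def alist_sub olit_def phi_def EE_def\<close>)
        next
          case 2 show ?thesis
            by (rule key[of 4 i' w' x' v' i w x v 1]) (use p v v' False bs Lt 2 xs in \<open>auto simp: valid_def alist_sub olit_def phi_def EE_def\<close>)
        next
          case 3 show ?thesis
            by (rule key[of 4 i' w' x' v' i w x v 2]) (use p v v' False bs Lt 3 xs in \<open>auto simp: valid_def alist_sub olit_def phi_def EE_def\<close>)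
        qed
      qed
    qed
  qed
qed

lemma lo_iso_sym:
  assumes "lo_iso L M" shows "lo_iso M L"
proof -
  obtain f where bf: "bij_betw f (fst L) (fst M)"
    and of: "\<forall>x\<in>fst L. \<forall>y\<in>fst L. (x, y) \<in> snd L \<longleftrightarrow> (f x, f y) \<in> snd M"
    using assms unfolding lo_iso_def by blast
  define g where "g = the_inv_into (fst L) f"
  have bg: "bij_betw g (fst M) (fst L)" unfolding g_def by (rule bij_betw_the_inv_into[OF bf])
  have fg: "f (g y) = y" if "y \<in> fst M" for y
    unfolding g_def using f_the_inv_into_f_bij_betw[OF bf that] .
  have "\<forall>x\<in>fst M. \<forall>y\<in>fst M. (x, y) \<in> snd M \<longleftrightarrow> (g x, g y) \<in> snd L"
  proof (intro ballI)
    fix x y assume "x \<in> fst M" "y \<in> fst M"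
    then have "g x \<in> fst L" "g y \<in> fst L" using bg by (auto simp: bij_betw_def)
    then show "(x, y) \<in> snd M \<longleftrightarrow> (g x, g y) \<in> snd L" using of fg \<open>x \<in> fst M\<close> \<open>y \<in> fst M\<close> by metis
  qed
  then show ?thesis using bg unfolding lo_iso_def by blast
qed

lemma lo_iso_trans:
  assumes "lo_iso L M" "lo_iso M N" shows "lo_iso L N"
proof -
  obtain f where bf: "bij_betw f (fst L) (fst M)"
    and of: "\<forall>x\<in>fst L. \<forall>y\<in>fst L. (x, y) \<in> snd L \<longleftrightarrow> (f x, f y) \<in> snd M"
    using assms unfolding lo_iso_def by blast
  obtain g where bg: "bij_betw g (fst M) (fst N)"
    and og: "\<forall>x\<in>fst M. \<forall>y\<in>fst M. (x, y) \<in> snd M \<longleftrightarrow> (g x, g y) \<in> snd N"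
    using assms unfolding lo_iso_def by blast
  have "bij_betw (g \<circ> f) (fst L) (fst N)" by (rule bij_betw_trans[OF bf bg])
  moreover have "\<forall>x\<in>fst L. \<forall>y\<in>fst L. (x, y) \<in> snd L \<longleftrightarrow> ((g \<circ> f) x, (g \<circ> f) y) \<in> snd N"
  proof (intro ballI)
    fix x y assume "x \<in> fst L" "y \<in> fst L"
    then have "f x \<in> fst M" "f y \<in> fst M" using bf by (auto simp: bij_betw_def)
    then show "(x, y) \<in> snd L \<longleftrightarrow> ((g \<circ> f) x, (g \<circ> f) y) \<in> snd N"
      using of og \<open>x \<in> fst L\<close> \<open>y \<in> fst L\<close> by simp
  qed
  ultimately show ?thesis unfolding lo_iso_def by blast
qed

lemma lo_iso_refl: "lo_iso L L"
  unfolding lo_iso_def by (rule exI[of _ id]) auto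

lemma rank_props:
  fixes F :: "'a set" and lt :: "'a \<Rightarrow> 'a \<Rightarrow> bool"
  assumes irr: "\<forall>x\<in>F. \<not> lt x x"
    and tr: "\<forall>x\<in>F. \<forall>y\<in>F. \<forall>z\<in>F. lt x y \<longrightarrow> lt y z \<longrightarrow> lt x z"
    and tot: "\<forall>x\<in>F. \<forall>y\<in>F. x \<noteq> y \<longrightarrow> lt x y \<or> lt y x"
    and fin: "\<forall>x\<in>F. finite {y\<in>F. lt y x}"
    and inf: "infinite F"
  shows "bij_betw (\<lambda>x. card {y\<in>F. lt y x}) F UNIV"
    and "\<forall>x\<in>F. \<forall>y\<in>F. lt x y \<longleftrightarrow> card {z\<in>F. lt z x} < card {z\<in>F. lt z y}"
proof -
  define rk where "rk x = card {y\<in>F. lt y x}" for x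
  have mono: "rk x < rk y" if "x \<in> F" "y \<in> F" "lt x y" for x y
  proof -
    have s: "{z\<in>F. lt z x} \<subseteq> {z\<in>F. lt z y}"
    proof
      fix z assume "z \<in> {z\<in>F. lt z x}"
      then show "z \<in> {z\<in>F. lt z y}" using that tr by blast
    qed
    have "x \<in> {z\<in>F. lt z y}" "x \<notin> {z\<in>F. lt z x}" using that irr by auto
    then have "{z\<in>F. lt z x} \<subset> {z\<in>F. lt z y}" using s by blast
    then show ?thesis unfolding rk_def using fin that(2) by (simp add: psubset_card_mono)
  qed
  have iff: "\<forall>x\<in>F. \<forall>y\<in>F. lt x y \<longleftrightarrow> rk x < rk y"
  proof (intro ballI iffI)
    fix x y assume "x \<in> F" "y \<in> F" "lt x y" then show "rk x < rk y" by (rule mono)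
  next
    fix x y assume xy: "x \<in> F" "y \<in> F" "rk x < rk y"
    show "lt x y"
    proof (rule ccontr)
      assume "\<not> lt x y"
      then have "x = y \<or> lt y x" using tot xy by blast
      then show False using mono[of y x] xy by auto
    qed
  qed
  have inj: "inj_on rk F"
  proof (rule inj_onI)
    fix x y assume "x \<in> F" "y \<in> F" "rk x = rk y"
    then show "x = y" using tot mono by (metis less_irrefl)
  qed
  have down: "m \<in> rk ` F" if "x \<in> F" "m < rk x" for x m
  proof -
    define P where "P = {z\<in>F. lt z x}"
    have fP: "finite P" unfolding P_def using fin that(1) by blast
    have "rk ` P \<subseteq> {..<rk x}" unfolding P_def using mono that(1) by auto
    moreover have "card (rk ` P) = card {..<rk x}"
      using card_image[OF inj_on_subset[OF inj]] unfolding P_def rk_def by auto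
    ultimately have "rk ` P = {..<rk x}" by (intro card_subset_eq) auto
    then show ?thesis using that(2) unfolding P_def by auto
  qed
  have "infinite (rk ` F)" using inj inf finite_imageD by blast
  then have unb: "\<exists>x\<in>F. m < rk x" for m
    using infinite_nat_iff_unbounded by auto
  have "rk ` F = UNIV" using unb down by blast
  then show "bij_betw (\<lambda>x. card {y\<in>F. lt y x}) F UNIV"
    using inj unfolding bij_betw_def rk_def by simp
  show "\<forall>x\<in>F. \<forall>y\<in>F. lt x y \<longleftrightarrow> card {z\<in>F. lt z x} < card {z\<in>F. lt z y}"
    using iff unfolding rk_def by simp
qed

lemma blocks_bij:
  fixes E :: "'a set" and lessB :: "'a \<Rightarrow> 'a \<Rightarrow> bool" and blk :: "'a \<Rightarrow> nat \<times> nat"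
  assumes irr: "\<forall>x\<in>E. \<not> lessB x x"
    and tr: "\<forall>x\<in>E. \<forall>y\<in>E. \<forall>z\<in>E. lessB x y \<longrightarrow> lessB y z \<longrightarrow> lessB x z"
    and tot: "\<forall>x\<in>E. \<forall>y\<in>E. x \<noteq> y \<longrightarrow> lessB x y \<or> lessB y x"
    and rng: "\<forall>e\<in>E. fst (blk e) < n"
    and inf: "\<forall>i<n. \<forall>k. infinite {e\<in>E. blk e = (i, k)}"
    and fin: "\<forall>e\<in>E. finite {e'\<in>E. blk e' = blk e \<and> lessB e' e}"
  shows "bij_betw (\<lambda>e. (fst (blk e), snd (blk e), card {e'\<in>E. blk e' = blk e \<and> lessB e' e})) E ({..<n} \<times> UNIV)"
    and "\<forall>e\<in>E. \<forall>e'\<in>E. blk e = blk e' \<longrightarrow> (lessB e e' \<longleftrightarrow>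
          card {y\<in>E. blk y = blk e \<and> lessB y e} < card {y\<in>E. blk y = blk e' \<and> lessB y e'})"
proof -
  define F where "F b = {e\<in>E. blk e = b}" for b
  define rk where "rk e = card {e'\<in>E. blk e' = blk e \<and> lessB e' e}" for e
  have rkF: "rk e = card {y\<in>F b. lessB y e}" if "e \<in> F b" for e b
  proof -
    have "{y\<in>F b. lessB y e} = {e'\<in>E. blk e' = blk e \<and> lessB e' e}" using that unfolding F_def by auto
    then show ?thesis unfolding rk_def by simp
  qed
  have RP: "bij_betw (\<lambda>x. card {y\<in>F b. lessB y x}) (F b) UNIV \<and>
     (\<forall>x\<in>F b. \<forall>y\<in>F b. lessB x y \<longleftrightarrow> card {z\<in>F b. lessB z x} < card {z\<in>F b. lessB z y})"
    if "fst b < n" for b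
  proof -
    have inf': "infinite (F b)" using inf that unfolding F_def by (cases b) auto
    have fin': "\<forall>x\<in>F b. finite {y\<in>F b. lessB y x}"
    proof
      fix x assume x: "x \<in> F b"
      then have "{y\<in>F b. lessB y x} = {e'\<in>E. blk e' = blk x \<and> lessB e' x}" unfolding F_def by auto
      then show "finite {y\<in>F b. lessB y x}" using fin x unfolding F_def by auto
    qed
    have s: "F b \<subseteq> E" unfolding F_def by auto
    have irr': "\<forall>x\<in>F b. \<not> lessB x x" using irr s by blast
    have tr': "\<forall>x\<in>F b. \<forall>y\<in>F b. \<forall>z\<in>F b. lessB x y \<longrightarrow> lessB y z \<longrightarrow> lessB x z"
      using tr s by (meson subsetD)
    have tot': "\<forall>x\<in>F b. \<forall>y\<in>F b. x \<noteq> y \<longrightarrow> lessB x y \<or> lessB y x" using tot s by (meson subsetD)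
    show ?thesis using rank_props[OF irr' tr' tot' fin' inf'] by blast
  qed
  have rkiff: "\<forall>e\<in>E. \<forall>e'\<in>E. blk e = blk e' \<longrightarrow> (lessB e e' \<longleftrightarrow> rk e < rk e')"
  proof (intro ballI impI)
    fix e e' assume e: "e \<in> E" "e' \<in> E" "blk e = blk e'"
    then have m: "e \<in> F (blk e)" "e' \<in> F (blk e)" unfolding F_def by auto
    have "fst (blk e) < n" using rng e by auto
    then have r: "\<forall>x\<in>F (blk e). \<forall>y\<in>F (blk e). lessB x y \<longleftrightarrow> card {z\<in>F (blk e). lessB z x} < card {z\<in>F (blk e). lessB z y}"
      using RP[of "blk e"] by blast
    have "lessB e e' \<longleftrightarrow> card {z\<in>F (blk e). lessB z e} < card {z\<in>F (blk e). lessB z e'}"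
      using r m by blast
    then show "lessB e e' \<longleftrightarrow> rk e < rk e'" using rkF[OF m(1)] rkF[OF m(2)] by simp
  qed
  then show "\<forall>e\<in>E. \<forall>e'\<in>E. blk e = blk e' \<longrightarrow> (lessB e e' \<longleftrightarrow>
          card {y\<in>E. blk y = blk e \<and> lessB y e} < card {y\<in>E. blk y = blk e' \<and> lessB y e'})"
    unfolding rk_def by simp
  have "bij_betw (\<lambda>e. (fst (blk e), snd (blk e), rk e)) E ({..<n} \<times> UNIV)"
    unfolding bij_betw_def
  proof
    show "inj_on (\<lambda>e. (fst (blk e), snd (blk e), rk e)) E"
    proof (rule inj_onI)
      fix e e' assume e: "e \<in> E" "e' \<in> E" "(fst (blk e), snd (blk e), rk e) = (fst (blk e'), snd (blk e'), rk e')"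
      then have b: "blk e = blk e'" by (simp add: prod_eq_iff)
      show "e = e'"
      proof (rule ccontr)
        assume "e \<noteq> e'"
        then have "lessB e e' \<or> lessB e' e" using tot e by blast
        then show False using rkiff e b by auto
      qed
    qed
    show "(\<lambda>e. (fst (blk e), snd (blk e), rk e)) ` E = {..<n} \<times> UNIV"
    proof (intro set_eqI iffI)
      fix z assume "z \<in> (\<lambda>e. (fst (blk e), snd (blk e), rk e)) ` E"
      then show "z \<in> {..<n} \<times> UNIV" using rng by auto
    next
      fix z :: "nat \<times> nat \<times> nat" assume "z \<in> {..<n} \<times> UNIV"
      then obtain i k m where z: "z = (i, k, m)" "i < n" by (cases z) auto
      have "bij_betw (\<lambda>x. card {y\<in>F (i, k). lessB y x}) (F (i, k)) UNIV" using RP[of "(i, k)"] z by simp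
      then have "m \<in> (\<lambda>x. card {y\<in>F (i, k). lessB y x}) ` F (i, k)" unfolding bij_betw_def by simp
      then obtain x where x: "x \<in> F (i, k)" "card {y\<in>F (i, k). lessB y x} = m" by (rule imageE) simp
      then have "rk x = m" using rkF by simp
      moreover have "x \<in> E" "blk x = (i, k)" using x unfolding F_def by auto
      ultimately have "z = (fst (blk x), snd (blk x), rk x)" using z by simp
      then show "z \<in> (\<lambda>e. (fst (blk e), snd (blk e), rk e)) ` E" using \<open>x \<in> E\<close> by (rule image_eqI)
    qed
  qed
  then show "bij_betw (\<lambda>e. (fst (blk e), snd (blk e), card {e'\<in>E. blk e' = blk e \<and> lessB e' e})) E ({..<n} \<times> UNIV)"
    unfolding rk_def .
qed

lemma iso_from_bij:
  fixes E :: "'a set" and less :: "'a \<Rightarrow> 'a \<Rightarrow> bool" and T :: "'b lo"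
  assumes bij: "bij_betw h E (fst T)"
    and irr: "\<forall>x\<in>E. \<not> less x x"
    and tot: "\<forall>x\<in>E. \<forall>y\<in>E. x \<noteq> y \<longrightarrow> less x y \<or> less y x"
    and asym: "\<forall>a b. (a, b) \<in> snd T \<longrightarrow> (b, a) \<notin> snd T"
    and fwd: "\<forall>x\<in>E. \<forall>y\<in>E. less x y \<longrightarrow> (h x, h y) \<in> snd T"
  shows "lo_iso (E, {(x, y). x \<in> E \<and> y \<in> E \<and> less x y}) T"
  unfolding lo_iso_def
proof (rule exI[of _ h], intro conjI)
  show "bij_betw h (fst (E, {(x, y). x \<in> E \<and> y \<in> E \<and> less x y})) (fst T)" using bij by simp
  show "\<forall>x\<in>fst (E, {(x, y). x \<in> E \<and> y \<in> E \<and> less x y}).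
       \<forall>y\<in>fst (E, {(x, y). x \<in> E \<and> y \<in> E \<and> less x y}).
          ((x, y) \<in> snd (E, {(x, y). x \<in> E \<and> y \<in> E \<and> less x y})) = ((h x, h y) \<in> snd T)"
  proof (intro ballI)
    fix x y assume "x \<in> fst (E, {(x, y). x \<in> E \<and> y \<in> E \<and> less x y})" "y \<in> fst (E, {(x, y). x \<in> E \<and> y \<in> E \<and> less x y})"
    then have xy: "x \<in> E" "y \<in> E" by auto
    have "less x y \<longleftrightarrow> (h x, h y) \<in> snd T"
    proof
      assume "less x y" then show "(h x, h y) \<in> snd T" using fwd xy by blast
    next
      assume hxy: "(h x, h y) \<in> snd T"
      show "less x y"
      proof (rule ccontr)
        assume "\<not> less x y"
        then have "x = y \<or> less y x" using tot xy by blast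
        then show False
        proof
          assume "x = y" then show False using hxy asym by blast
        next
          assume "less y x" then show False using hxy asym fwd xy by blast
        qed
      qed
    qed
    then show "((x, y) \<in> snd (E, {(x, y). x \<in> E \<and> y \<in> E \<and> less x y})) = ((h x, h y) \<in> snd T)"
      using xy by simp
  qed
qed

abbreviation "T1 n \<equiv> lo_mult (lo_mult omega omega) (fin_ord n)"
abbreviation "T2 n \<equiv> lo_mult (lo_rev (lo_mult omega omega)) (fin_ord n)"

lemma T1_dom: "fst (T1 n) = {..<n} \<times> UNIV"
  unfolding lo_mult_def omega_def fin_ord_def by auto
lemma T2_dom: "fst (T2 n) = {..<n} \<times> UNIV"
  unfolding lo_mult_def omega_def fin_ord_def lo_rev_def by auto
lemma T1_rel: "((i, k, m), (i', k', m')) \<in> snd (T1 n) \<longleftrightarrow>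
   i < n \<and> i' < n \<and> (i < i' \<or> (i = i' \<and> (k < k' \<or> (k = k' \<and> m < m'))))"
  unfolding lo_mult_def omega_def fin_ord_def by auto
lemma T2_rel: "((i, k, m), (i', k', m')) \<in> snd (T2 n) \<longleftrightarrow>
   i < n \<and> i' < n \<and> (i < i' \<or> (i = i' \<and> (k' < k \<or> (k' = k \<and> m' < m))))"
  unfolding lo_mult_def omega_def fin_ord_def lo_rev_def by auto

lemma T1_asym: "(a, b) \<in> snd (T1 n) \<Longrightarrow> (b, a) \<notin> snd (T1 n)"
  by (cases a, cases b) (auto simp: T1_rel)
lemma T2_asym: "(a, b) \<in> snd (T2 n) \<Longrightarrow> (b, a) \<notin> snd (T2 n)"
  by (cases a, cases b) (auto simp: T2_rel)

definition has_least :: "'a lo \<Rightarrow> bool" where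
  "has_least L \<longleftrightarrow> (\<exists>a\<in>fst L. \<forall>b\<in>fst L. b \<noteq> a \<longrightarrow> (a, b) \<in> snd L)"

lemma has_least_iso: "lo_iso L M \<Longrightarrow> has_least L \<Longrightarrow> has_least M"
proof -
  assume "lo_iso L M" "has_least L"
  then obtain f where bf: "bij_betw f (fst L) (fst M)"
    and of: "\<forall>x\<in>fst L. \<forall>y\<in>fst L. (x, y) \<in> snd L \<longleftrightarrow> (f x, f y) \<in> snd M"
    unfolding lo_iso_def by blast
  obtain a where a: "a \<in> fst L" "\<forall>b\<in>fst L. b \<noteq> a \<longrightarrow> (a, b) \<in> snd L"
    using \<open>has_least L\<close> unfolding has_least_def by blast
  have "f a \<in> fst M" using a bf by (auto simp: bij_betw_def)
  moreover have "\<forall>b\<in>fst M. b \<noteq> f a \<longrightarrow> (f a, b) \<in> snd M"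
  proof (intro ballI impI)
    fix b assume b: "b \<in> fst M" "b \<noteq> f a"
    then obtain c where c: "c \<in> fst L" "b = f c" using bf by (auto simp: bij_betw_def)
    then have "c \<noteq> a" using b by auto
    then show "(f a, b) \<in> snd M" using a c of by auto
  qed
  ultimately show ?thesis unfolding has_least_def by blast
qed

lemma T1_least: "1 \<le> n \<Longrightarrow> has_least (T1 n)"
  unfolding has_least_def T1_dom
  by (rule bexI[of _ "(0, 0, 0)"]) (auto simp: T1_rel)

lemma T2_not_least: "\<not> has_least (T2 n)"
proof
  assume "has_least (T2 n)"
  then obtain a where a: "a \<in> fst (T2 n)" "\<forall>b\<in>fst (T2 n). b \<noteq> a \<longrightarrow> (a, b) \<in> snd (T2 n)"
    unfolding has_least_def by blast
  obtain i k m where am: "a = (i, k, m)" by (cases a) auto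
  have "(i, k, Suc m) \<in> fst (T2 n)" using a am unfolding T2_dom by auto
  then have "(a, (i, k, Suc m)) \<in> snd (T2 n)" using a am by auto
  then show False unfolding am T2_rel by auto
qed

lemma T1_not_T2: "1 \<le> n \<Longrightarrow> \<not> lo_iso L (T1 n) \<or> \<not> lo_iso L (T2 n)"
  using has_least_iso[OF lo_iso_trans[OF lo_iso_sym]] T1_least T2_not_least by metis

abbreviation "W1 \<equiv> lo_mult omega (fin_ord 2)"
abbreviation "W2 \<equiv> lo_mult (lo_rev omega) (fin_ord 2)"

lemma W1_least: "has_least W1"
  unfolding has_least_def lo_mult_def omega_def fin_ord_def
  by (rule bexI[of _ "(0, 0)"]) auto

lemma W2_not_least: "\<not> has_least W2"
proof
  assume "has_least W2"
  then obtain a where a: "a \<in> fst W2" "\<forall>b\<in>fst W2. b \<noteq> a \<longrightarrow> (a, b) \<in> snd W2"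
    unfolding has_least_def by blast
  obtain i m where am: "a = (i, m)" by (cases a) auto
  have "(i, Suc m) \<in> fst W2" using a am unfolding lo_mult_def omega_def fin_ord_def lo_rev_def by auto
  then have "(a, (i, Suc m)) \<in> snd W2" using a am by auto
  then show False unfolding am lo_mult_def omega_def fin_ord_def lo_rev_def by auto
qed

lemma W1_not_W2: "\<not> lo_iso L W1 \<or> \<not> lo_iso L W2"
  using has_least_iso[OF lo_iso_trans[OF lo_iso_sym]] W1_least W2_not_least by metis

lemma two_copies:
  assumes iso: "lo_iso A (lo_mult L (fin_ord 2))" and UL: "fst L = UNIV"
  obtains sd :: "'a \<Rightarrow> nat" and ix :: "'a \<Rightarrow> 'b" where "\<forall>x\<in>fst A. sd x < 2"
    "\<forall>x\<in>fst A. \<forall>y\<in>fst A. (x, y) \<in> snd A \<longleftrightarrow> (sd x < sd y \<or> (sd x = sd y \<and> (ix x, ix y) \<in> snd L))"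
    "\<forall>x\<in>fst A. \<forall>y\<in>fst A. sd x = sd y \<longrightarrow> ix x = ix y \<longrightarrow> x = y"
    "\<forall>s<2. \<forall>m. \<exists>x\<in>fst A. sd x = s \<and> ix x = m"
proof -
  obtain f where bf: "bij_betw f (fst A) (fst (lo_mult L (fin_ord 2)))"
    and of: "\<forall>x\<in>fst A. \<forall>y\<in>fst A. (x, y) \<in> snd A \<longleftrightarrow> (f x, f y) \<in> snd (lo_mult L (fin_ord 2))"
    using iso unfolding lo_iso_def by blast
  have dom: "fst (lo_mult L (fin_ord 2)) = {..<2} \<times> UNIV" using UL unfolding lo_mult_def fin_ord_def by auto
  have rel: "((a, b), (c, d)) \<in> snd (lo_mult L (fin_ord 2)) \<longleftrightarrow> a < 2 \<and> c < 2 \<and> (a < c \<or> (a = c \<and> (b, d) \<in> snd L))"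
    for a b c d using UL unfolding lo_mult_def fin_ord_def by auto
  have fr: "f x \<in> {..<2} \<times> UNIV" if "x \<in> fst A" for x using bf that dom by (auto simp: bij_betw_def)
  show ?thesis
  proof (rule that[of "\<lambda>x. fst (f x)" "\<lambda>x. snd (f x)"])
    show "\<forall>x\<in>fst A. fst (f x) < 2" using fr by (simp add: mem_Times_iff)
    show "\<forall>x\<in>fst A. \<forall>y\<in>fst A. (x, y) \<in> snd A \<longleftrightarrow> (fst (f x) < fst (f y) \<or> (fst (f x) = fst (f y) \<and> (snd (f x), snd (f y)) \<in> snd L))"
    proof (intro ballI)
      fix x y assume xy: "x \<in> fst A" "y \<in> fst A"
      then show "(x, y) \<in> snd A \<longleftrightarrow> (fst (f x) < fst (f y) \<or> (fst (f x) = fst (f y) \<and> (snd (f x), snd (f y)) \<in> snd L))"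
        using of rel[of "fst (f x)" "snd (f x)" "fst (f y)" "snd (f y)"] fr[OF xy(1)] fr[OF xy(2)] by auto
    qed
    show "\<forall>x\<in>fst A. \<forall>y\<in>fst A. fst (f x) = fst (f y) \<longrightarrow> snd (f x) = snd (f y) \<longrightarrow> x = y"
      using bf unfolding bij_betw_def inj_on_def by (auto simp: prod_eq_iff)
    show "\<forall>s<2. \<forall>m. \<exists>x\<in>fst A. fst (f x) = s \<and> snd (f x) = m"
    proof (intro allI impI)
      fix s :: nat and m :: 'b assume "s < 2"
      then have "(s, m) \<in> f ` fst A" using bf dom unfolding bij_betw_def by auto
      then obtain x where "x \<in> fst A" "(s, m) = f x" by (rule imageE)
      then show "\<exists>x\<in>fst A. fst (f x) = s \<and> snd (f x) = m" by (metis fst_conv snd_conv)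
    qed
  qed
qed

locale tc =
  fixes D :: "nat set" and sd ix :: "nat \<Rightarrow> nat"
  assumes C1: "x \<in> D \<Longrightarrow> sd x < 2"
    and C3: "x \<in> D \<Longrightarrow> y \<in> D \<Longrightarrow> sd x = sd y \<Longrightarrow> ix x = ix y \<Longrightarrow> x = y"
    and C4: "s < 2 \<Longrightarrow> \<exists>x\<in>D. sd x = s \<and> ix x = m"
begin

definition g :: "nat \<Rightarrow> nat \<Rightarrow> nat" where "g s m = (SOME x. x \<in> D \<and> sd x = s \<and> ix x = m)"

lemma g:
  assumes "s < 2" shows "g s m \<in> D \<and> sd (g s m) = s \<and> ix (g s m) = m"
proof -
  have "\<exists>x. x \<in> D \<and> sd x = s \<and> ix x = m" using C4[OF assms] by blast
  then show ?thesis unfolding g_def by (rule someI_ex)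
qed

lemma fin_ix: "finite {y\<in>D. ix y \<le> N}"
proof -
  have "{y\<in>D. ix y \<le> N} \<subseteq> (\<lambda>p. g (fst p) (snd p)) ` ({..<2} \<times> {..N})"
  proof
    fix y assume y: "y \<in> {y\<in>D. ix y \<le> N}"
    then have "g (sd y) (ix y) = y" using g[of "sd y" "ix y"] C1 C3 by auto
    then show "y \<in> (\<lambda>p. g (fst p) (snd p)) ` ({..<2} \<times> {..N})" using y C1
      by (intro image_eqI[of _ _ "(sd y, ix y)"]) auto
  qed
  then show ?thesis by (rule finite_subset) auto
qed

lemma inf_sd: "s < 2 \<Longrightarrow> infinite {y\<in>D. sd y = s \<and> m \<le> ix y}"
proof
  assume s: "s < 2" and f: "finite {y\<in>D. sd y = s \<and> m \<le> ix y}"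
  have "{m..} \<subseteq> ix ` {y\<in>D. sd y = s \<and> m \<le> ix y}"
  proof
    fix k assume "k \<in> {m..}"
    then show "k \<in> ix ` {y\<in>D. sd y = s \<and> m \<le> ix y}" using g[OF s, of k] by force
  qed
  then have "finite {m..}" using f by (meson finite_imageI finite_subset)
  then show False using infinite_Ici by blast
qed

lemma unb: "s < 2 \<Longrightarrow> \<exists>v\<in>D. sd v = s \<and> m \<le> ix v \<and> w \<le> v"
proof -
  assume "s < 2"
  then have "infinite {y\<in>D. sd y = s \<and> m \<le> ix y}" by (rule inf_sd)
  then obtain v where "v \<in> {y\<in>D. sd y = s \<and> m \<le> ix y}" "w \<le> v"
    using infinite_nat_iff_unbounded_le by blast
  then show ?thesis by blast
qed

end


lemma prec_rels:
  assumes lo: "is_lo A"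
  shows "\<forall>x\<in>EE n A. \<not> prec A x x"
    and "\<forall>x\<in>EE n A. \<forall>y\<in>EE n A. \<forall>z\<in>EE n A. prec A x y \<longrightarrow> prec A y z \<longrightarrow> prec A x z"
    and "\<forall>x\<in>EE n A. \<forall>y\<in>EE n A. x \<noteq> y \<longrightarrow> prec A x y \<or> prec A y x"
  using prec_irrefl[OF lo] prec_trans[OF lo] prec_total[OF lo] by blast+

lemma EE_mem: "(i, w, x) \<in> EE n A \<longleftrightarrow> i < n \<and> exs A w x"
  unfolding EE_def by simp

lemma W1_iso:
  assumes lo: "is_lo A" and iso: "lo_iso A W1"
  shows "lo_iso (EE n A, {(p, q). p \<in> EE n A \<and> q \<in> EE n A \<and> prec A p q}) (T1 n)"
proof -
  have UL: "fst omega = UNIV" by (simp add: omega_def)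
  obtain sd ix :: "nat \<Rightarrow> nat" where C1: "\<forall>x\<in>fst A. sd x < 2"
    and C2': "\<forall>x\<in>fst A. \<forall>y\<in>fst A. (x, y) \<in> snd A \<longleftrightarrow> (sd x < sd y \<or> (sd x = sd y \<and> (ix x, ix y) \<in> snd omega))"
    and C3: "\<forall>x\<in>fst A. \<forall>y\<in>fst A. sd x = sd y \<longrightarrow> ix x = ix y \<longrightarrow> x = y"
    and C4: "\<forall>s<2. \<forall>m. \<exists>x\<in>fst A. sd x = s \<and> ix x = m"
    using two_copies[OF iso UL] by blast
  have C2: "(x, y) \<in> snd A \<longleftrightarrow> (sd x < sd y \<or> (sd x = sd y \<and> ix x < ix y))"
    if "x \<in> fst A" "y \<in> fst A" for x y using C2' that by (simp add: omega_def)
  interpret tc "fst A" sd ix using C1 C3 C4 by unfold_locales auto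
  have Emem: "(i, w, x) \<in> EE n A \<longleftrightarrow> i < n \<and> w \<in> fst A \<and> x \<in> fst A \<and> (x, w) \<notin> snd A" for i w x
  proof
    assume "(i, w, x) \<in> EE n A" then show "i < n \<and> w \<in> fst A \<and> x \<in> fst A \<and> (x, w) \<notin> snd A"
      unfolding EE_mem exs_def by auto
  next
    assume a: "i < n \<and> w \<in> fst A \<and> x \<in> fst A \<and> (x, w) \<notin> snd A"
    obtain v where v: "v \<in> fst A" "sd v = 1" "Suc (ix x) \<le> ix v" "w \<le> v" using unb[of 1 "Suc (ix x)" w] by auto
    have "(v, x) \<notin> snd A" using C2[OF v(1)] a C1 v by fastforce
    then show "(i, w, x) \<in> EE n A" unfolding EE_mem exs_def using a v by blast
  qed
  define blk where "blk p = (case p of (i, w, x) \<Rightarrow>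
     (i, if sd x = 0 then 0 else if sd w = 0 then Suc (ix x) else Suc (Suc (ix x))))" for p :: "nat \<times> nat \<times> nat"
  have blk_simp: "blk (i, w, x) = (i, if sd x = 0 then 0 else if sd w = 0 then Suc (ix x) else Suc (Suc (ix x)))"
    for i w x unfolding blk_def by simp
  note PR = prec_rels[OF lo, of n]
  have rng: "\<forall>e\<in>EE n A. fst (blk e) < n" unfolding EE_def blk_def by auto
  have inf: "\<forall>i<n. \<forall>k. infinite {e\<in>EE n A. blk e = (i, k)}"
  proof (intro allI impI)
    fix i k assume i: "i < n"
    show "infinite {e\<in>EE n A. blk e = (i, k)}"
    proof (cases k)
      case 0
      let ?S = "{y\<in>fst A. sd y = 0 \<and> 0 \<le> ix y}"
      have "(\<lambda>x. (i, x, x)) ` ?S \<subseteq> {e\<in>EE n A. blk e = (i, k)}"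
        using i 0 C2 by (auto simp: Emem blk_simp)
      moreover have "infinite ((\<lambda>x. (i, x, x)) ` ?S)"
        using inf_sd[of 0 0] by (auto simp: inj_on_def dest: finite_imageD)
      ultimately show ?thesis using finite_subset by blast
    next
      case (Suc m)
      define c where "c = g 1 m"
      have c: "c \<in> fst A" "sd c = 1" "ix c = m" using g[of 1 m] unfolding c_def by auto
      let ?S = "{y\<in>fst A. sd y = 0 \<and> 0 \<le> ix y}"
      have "(\<lambda>w. (i, w, c)) ` ?S \<subseteq> {e\<in>EE n A. blk e = (i, k)}"
        using i Suc c C2 by (auto simp: Emem blk_simp)
      moreover have "infinite ((\<lambda>w. (i, w, c)) ` ?S)"
        using inf_sd[of 0 0] by (auto simp: inj_on_def dest: finite_imageD)
      ultimately show ?thesis using finite_subset by blast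
    qed
  qed
  have fin: "\<forall>e\<in>EE n A. finite {e'\<in>EE n A. blk e' = blk e \<and> prec A e' e}"
  proof
    fix e assume eE: "e \<in> EE n A"
    obtain i w x where e: "e = (i, w, x)" by (cases e) auto
    have ex: "i < n" "w \<in> fst A" "x \<in> fst A" "(x, w) \<notin> snd A" using eE e Emem by auto
    define N where "N = ix w + ix x + 1"
    have "{e'\<in>EE n A. blk e' = blk e \<and> prec A e' e} \<subseteq> {i} \<times> {y\<in>fst A. ix y \<le> N} \<times> {y\<in>fst A. ix y \<le> N}"
    proof
      fix e' assume e'S: "e' \<in> {e'\<in>EE n A. blk e' = blk e \<and> prec A e' e}"
      obtain i' w' x' where e': "e' = (i', w', x')" by (cases e') auto
      have ex': "i' < n" "w' \<in> fst A" "x' \<in> fst A" "(x', w') \<notin> snd A" using e'S e' Emem by auto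
      have B: "i' = i" "(if sd x' = 0 then 0 else if sd w' = 0 then Suc (ix x') else Suc (Suc (ix x')))
          = (if sd x = 0 then 0 else if sd w = 0 then Suc (ix x) else Suc (Suc (ix x)))"
        using e'S e e' blk_simp by auto
      have P: "(x', x) \<in> snd A \<or> (x' = x \<and> (w', w) \<in> snd A)" using e'S e e' B(1) unfolding prec_def by auto
      have h1: "\<not> (sd x' < sd w' \<or> (sd x' = sd w' \<and> ix x' < ix w'))" using ex'(4) C2[OF ex'(3) ex'(2)] by simp
      have h2: "\<not> (sd x < sd w \<or> (sd x = sd w \<and> ix x < ix w))" using ex(4) C2[OF ex(3) ex(2)] by simp
      have P': "(sd x' < sd x \<or> (sd x' = sd x \<and> ix x' < ix x)) \<or> (x' = x \<and> (sd w' < sd w \<or> (sd w' = sd w \<and> ix w' < ix w)))"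
        using P C2[OF ex'(3) ex(3)] C2[OF ex'(2) ex(2)] by auto
      have s: "sd x < 2" "sd w < 2" "sd x' < 2" "sd w' < 2" using C1 ex ex' by auto
      have "ix x' \<le> N \<and> ix w' \<le> N"
      proof (cases "x' = x")
        case True
        then show ?thesis using B(2) h1 h2 P' s unfolding N_def by (auto split: if_splits)
      next
        case False
        then show ?thesis using B(2) h1 h2 P' s unfolding N_def by (auto split: if_splits)
      qed
      then show "e' \<in> {i} \<times> {y\<in>fst A. ix y \<le> N} \<times> {y\<in>fst A. ix y \<le> N}" using e' B(1) ex' by auto
    qed
    then show "finite {e'\<in>EE n A. blk e' = blk e \<and> prec A e' e}"
      by (rule finite_subset) (intro finite_cartesian_product fin_ix finite.intros)
  qed
  have mono: "fst (blk e) < fst (blk e') \<or> (fst (blk e) = fst (blk e') \<and> snd (blk e) \<le> snd (blk e'))"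
    if "e \<in> EE n A" "e' \<in> EE n A" "prec A e e'" for e e'
  proof -
    obtain i w x where e: "e = (i, w, x)" by (cases e) auto
    obtain i' w' x' where e': "e' = (i', w', x')" by (cases e') auto
    have ex: "w \<in> fst A" "x \<in> fst A" "w' \<in> fst A" "x' \<in> fst A" using that e e' Emem by auto
    have P: "i < i' \<or> (i = i' \<and> ((x, x') \<in> snd A \<or> (x = x' \<and> (w, w') \<in> snd A)))"
      using that(3) e e' unfolding prec_def by auto
    have P': "i < i' \<or> (i = i' \<and> ((sd x < sd x' \<or> (sd x = sd x' \<and> ix x < ix x')) \<or> (x = x' \<and> (sd w < sd w' \<or> (sd w = sd w' \<and> ix w < ix w')))))"
      using P C2[OF ex(2) ex(4)] C2[OF ex(1) ex(3)] by auto
    have s: "sd x < 2" "sd w < 2" "sd x' < 2" "sd w' < 2" using C1 ex by auto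
    show ?thesis unfolding e e' blk_simp using P' s by (auto split: if_splits)
  qed
  obtain bij: "bij_betw (\<lambda>e. (fst (blk e), snd (blk e), card {e'\<in>EE n A. blk e' = blk e \<and> prec A e' e})) (EE n A) ({..<n} \<times> UNIV)"
    and rkiff: "\<forall>e\<in>EE n A. \<forall>e'\<in>EE n A. blk e = blk e' \<longrightarrow> (prec A e e' \<longleftrightarrow>
          card {y\<in>EE n A. blk y = blk e \<and> prec A y e} < card {y\<in>EE n A. blk y = blk e' \<and> prec A y e'})"
    using blocks_bij[OF PR rng inf fin] by blast
  show ?thesis
  proof (rule iso_from_bij[OF _ PR(1) PR(3) _ ])
    show "bij_betw (\<lambda>e. (fst (blk e), snd (blk e), card {e'\<in>EE n A. blk e' = blk e \<and> prec A e' e})) (EE n A) (fst (T1 n))"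
      using bij T1_dom by simp
    show "\<forall>a b. (a, b) \<in> snd (T1 n) \<longrightarrow> (b, a) \<notin> snd (T1 n)" using T1_asym by blast
    show "\<forall>x\<in>EE n A. \<forall>y\<in>EE n A. prec A x y \<longrightarrow>
       ((fst (blk x), snd (blk x), card {e'\<in>EE n A. blk e' = blk x \<and> prec A e' x}),
        (fst (blk y), snd (blk y), card {e'\<in>EE n A. blk e' = blk y \<and> prec A e' y})) \<in> snd (T1 n)"
    proof (intro ballI impI)
      fix x y assume xy: "x \<in> EE n A" "y \<in> EE n A" "prec A x y"
      have r: "fst (blk x) < n" "fst (blk y) < n" using rng xy by auto
      show "((fst (blk x), snd (blk x), card {e'\<in>EE n A. blk e' = blk x \<and> prec A e' x}),
        (fst (blk y), snd (blk y), card {e'\<in>EE n A. blk e' = blk y \<and> prec A e' y})) \<in> snd (T1 n)"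
      proof (cases "blk x = blk y")
        case True
        then show ?thesis using rkiff xy r unfolding T1_rel by auto
      next
        case False
        then show ?thesis using mono[OF xy] r unfolding T1_rel by (auto simp: prod_eq_iff)
      qed
    qed
  qed
qed


lemma W2_iso:
  assumes lo: "is_lo A" and iso: "lo_iso A W2"
  shows "lo_iso (EE n A, {(p, q). p \<in> EE n A \<and> q \<in> EE n A \<and> prec A p q}) (T2 n)"
proof -
  have UL: "fst (lo_rev omega) = UNIV" by (simp add: omega_def lo_rev_def)
  obtain sd ix :: "nat \<Rightarrow> nat" where C1: "\<forall>x\<in>fst A. sd x < 2"
    and C2': "\<forall>x\<in>fst A. \<forall>y\<in>fst A. (x, y) \<in> snd A \<longleftrightarrow> (sd x < sd y \<or> (sd x = sd y \<and> (ix x, ix y) \<in> snd (lo_rev omega)))"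
    and C3: "\<forall>x\<in>fst A. \<forall>y\<in>fst A. sd x = sd y \<longrightarrow> ix x = ix y \<longrightarrow> x = y"
    and C4: "\<forall>s<2. \<forall>m. \<exists>x\<in>fst A. sd x = s \<and> ix x = m"
    using two_copies[OF iso UL] by blast
  have C2: "(x, y) \<in> snd A \<longleftrightarrow> (sd x < sd y \<or> (sd x = sd y \<and> ix y < ix x))"
    if "x \<in> fst A" "y \<in> fst A" for x y using C2' that by (simp add: omega_def lo_rev_def)
  interpret tc "fst A" sd ix using C1 C3 C4 by unfold_locales auto
  have Emem: "(i, w, x) \<in> EE n A \<longleftrightarrow> i < n \<and> w \<in> fst A \<and> x \<in> fst A \<and> (x, w) \<notin> snd A \<and>
      (\<exists>v\<in>fst A. (v, x) \<notin> snd A \<and> w \<le> v)" for i w x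
    unfolding EE_mem exs_def by auto
  define blk where "blk p = (case p of (i, w, x) \<Rightarrow> (i, if sd x = 1 then 0 else Suc (ix x)))" for p :: "nat \<times> nat \<times> nat"
  have blk_simp: "blk (i, w, x) = (i, if sd x = 1 then 0 else Suc (ix x))" for i w x unfolding blk_def by simp
  note PR = prec_rels[OF lo, of n]
  have PR1: "\<forall>x\<in>EE n A. \<not> (\<lambda>p q. prec A q p) x x" using PR(1) by simp
  have PR2: "\<forall>x\<in>EE n A. \<forall>y\<in>EE n A. \<forall>z\<in>EE n A. (\<lambda>p q. prec A q p) x y \<longrightarrow> (\<lambda>p q. prec A q p) y z \<longrightarrow> (\<lambda>p q. prec A q p) x z"
    using PR(2) by blast
  have PR3: "\<forall>x\<in>EE n A. \<forall>y\<in>EE n A. x \<noteq> y \<longrightarrow> (\<lambda>p q. prec A q p) x y \<or> (\<lambda>p q. prec A q p) y x"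
    using PR(3) by blast
  have rng: "\<forall>e\<in>EE n A. fst (blk e) < n" unfolding EE_def blk_def by auto
  have inf: "\<forall>i<n. \<forall>k. infinite {e\<in>EE n A. blk e = (i, k)}"
  proof (intro allI impI)
    fix i k assume i: "i < n"
    show "infinite {e\<in>EE n A. blk e = (i, k)}"
    proof (cases k)
      case 0
      let ?S = "{y\<in>fst A. sd y = 1 \<and> 0 \<le> ix y}"
      have "(\<lambda>x. (i, x, x)) ` ?S \<subseteq> {e\<in>EE n A. blk e = (i, k)}"
      proof
        fix e assume "e \<in> (\<lambda>x. (i, x, x)) ` ?S"
        then obtain x where x: "e = (i, x, x)" "x \<in> fst A" "sd x = 1" by auto
        have nx: "(x, x) \<notin> snd A" using C2[OF x(2) x(2)] by simp
        then have "\<exists>v\<in>fst A. (v, x) \<notin> snd A \<and> x \<le> v" using x(2) by blast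
        then show "e \<in> {e\<in>EE n A. blk e = (i, k)}" using x nx i 0 by (auto simp: Emem blk_simp)
      qed
      moreover have "infinite ((\<lambda>x. (i, x, x)) ` ?S)"
        using inf_sd[of 1 0] by (auto simp: inj_on_def dest: finite_imageD)
      ultimately show ?thesis using finite_subset by blast
    next
      case (Suc m)
      define c where "c = g 0 m"
      have c: "c \<in> fst A" "sd c = 0" "ix c = m" using g[of 0 m] unfolding c_def by auto
      let ?S = "{y\<in>fst A. sd y = 0 \<and> m \<le> ix y}"
      have "(\<lambda>w. (i, w, c)) ` ?S \<subseteq> {e\<in>EE n A. blk e = (i, k)}"
      proof
        fix e assume "e \<in> (\<lambda>w. (i, w, c)) ` ?S"
        then obtain w where w: "e = (i, w, c)" "w \<in> fst A" "sd w = 0" "m \<le> ix w" by auto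
        obtain v where v: "v \<in> fst A" "sd v = 1" "0 \<le> ix v" "w \<le> v" using unb[of 1 0 w] by auto
        have "(v, c) \<notin> snd A" using C2[OF v(1) c(1)] v c by simp
        moreover have "(c, w) \<notin> snd A" using C2[OF c(1) w(2)] w c by simp
        ultimately show "e \<in> {e\<in>EE n A. blk e = (i, k)}" using w v c i Suc by (auto simp: Emem blk_simp)
      qed
      moreover have "infinite ((\<lambda>w. (i, w, c)) ` ?S)"
        using inf_sd[of 0 m] by (auto simp: inj_on_def dest: finite_imageD)
      ultimately show ?thesis using finite_subset by blast
    qed
  qed
  have fin: "\<forall>e\<in>EE n A. finite {e'\<in>EE n A. blk e' = blk e \<and> (\<lambda>p q. prec A q p) e' e}"
  proof
    fix e assume eE: "e \<in> EE n A"
    obtain i w x where e: "e = (i, w, x)" by (cases e) auto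
    have ex: "i < n" "w \<in> fst A" "x \<in> fst A" "(x, w) \<notin> snd A" using eE e Emem by auto
    define M where "M = Max {y\<in>fst A. ix y \<le> ix x}"
    have "{e'\<in>EE n A. blk e' = blk e \<and> (\<lambda>p q. prec A q p) e' e} \<subseteq>
        {i} \<times> ({..M} \<union> {y\<in>fst A. ix y \<le> ix w}) \<times> {y\<in>fst A. ix y \<le> ix x}"
    proof
      fix e' assume e'S: "e' \<in> {e'\<in>EE n A. blk e' = blk e \<and> (\<lambda>p q. prec A q p) e' e}"
      obtain i' w' x' where e': "e' = (i', w', x')" by (cases e') auto
      have ex': "i' < n" "w' \<in> fst A" "x' \<in> fst A" "(x', w') \<notin> snd A"
        and vv: "\<exists>v\<in>fst A. (v, x') \<notin> snd A \<and> w' \<le> v" using e'S e' Emem by auto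
      have B: "i' = i" "(if sd x' = 1 then 0 else Suc (ix x')) = (if sd x = 1 then 0 else Suc (ix x))"
        using e'S e e' blk_simp by auto
      have P: "(x, x') \<in> snd A \<or> (x = x' \<and> (w, w') \<in> snd A)" using e'S e e' B(1) unfolding prec_def by auto
      have h1: "\<not> (sd x' < sd w' \<or> (sd x' = sd w' \<and> ix w' < ix x'))" using ex'(4) C2[OF ex'(3) ex'(2)] by simp
      have h2: "\<not> (sd x < sd w \<or> (sd x = sd w \<and> ix w < ix x))" using ex(4) C2[OF ex(3) ex(2)] by simp
      have P': "(sd x < sd x' \<or> (sd x = sd x' \<and> ix x' < ix x)) \<or> (x = x' \<and> (sd w < sd w' \<or> (sd w = sd w' \<and> ix w' < ix w)))"
        using P C2[OF ex(3) ex'(3)] C2[OF ex(2) ex'(2)] by auto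
      have s: "sd x < 2" "sd w < 2" "sd x' < 2" "sd w' < 2" using C1 ex ex' by auto
      have xx: "ix x' \<le> ix x" using B(2) P' s by (auto split: if_splits)
      have ww: "w' \<le> M \<or> ix w' \<le> ix w"
      proof (cases "sd x = 1")
        case True
        then have "sd x' = 1" using B(2) s by (auto split: if_splits)
        obtain v where v: "v \<in> fst A" "(v, x') \<notin> snd A" "w' \<le> v" using vv by blast
        have "\<not> (sd v < sd x' \<or> (sd v = sd x' \<and> ix x' < ix v))" using v(2) C2[OF v(1) ex'(3)] by simp
        moreover have "sd v < 2" using C1 v(1) by blast
        ultimately have "sd v = 1" "ix v \<le> ix x'" using \<open>sd x' = 1\<close> by auto
        then have "v \<in> {y\<in>fst A. ix y \<le> ix x}" using v(1) xx by auto
        then have "v \<le> M" unfolding M_def using fin_ix by (intro Max_ge) auto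
        then show ?thesis using v(3) by simp
      next
        case False
        then have "sd x = 0" "sd x' = 0" "ix x' = ix x" using B(2) s by (auto split: if_splits)
        then have "x' = x" using tc.C3[OF tc_axioms ex'(3) ex(3)] by simp
        then have "\<not> (sd x < sd x' \<or> (sd x = sd x' \<and> ix x' < ix x))" by simp
        then have "sd w < sd w' \<or> (sd w = sd w' \<and> ix w' < ix w)" using P' by blast
        moreover have "sd w' = 0" using h1 \<open>sd x' = 0\<close> by simp
        moreover have "sd w = 0" using h2 \<open>sd x = 0\<close> by simp
        ultimately show ?thesis by simp
      qed
      show "e' \<in> {i} \<times> ({..M} \<union> {y\<in>fst A. ix y \<le> ix w}) \<times> {y\<in>fst A. ix y \<le> ix x}"
        using e' B(1) ex' xx ww by auto
    qed
    then show "finite {e'\<in>EE n A. blk e' = blk e \<and> (\<lambda>p q. prec A q p) e' e}"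
      by (rule finite_subset) (intro finite_cartesian_product fin_ix finite_UnI finite_atMost finite.intros)
  qed
  have mono: "fst (blk e) < fst (blk e') \<or> (fst (blk e) = fst (blk e') \<and> snd (blk e') \<le> snd (blk e))"
    if "e \<in> EE n A" "e' \<in> EE n A" "prec A e e'" for e e'
  proof -
    obtain i w x where e: "e = (i, w, x)" by (cases e) auto
    obtain i' w' x' where e': "e' = (i', w', x')" by (cases e') auto
    have ex: "w \<in> fst A" "x \<in> fst A" "w' \<in> fst A" "x' \<in> fst A" using that e e' Emem by auto
    have P: "i < i' \<or> (i = i' \<and> ((x, x') \<in> snd A \<or> (x = x' \<and> (w, w') \<in> snd A)))"
      using that(3) e e' unfolding prec_def by auto
    have P': "i < i' \<or> (i = i' \<and> ((sd x < sd x' \<or> (sd x = sd x' \<and> ix x' < ix x)) \<or> x = x'))"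
      using P C2[OF ex(2) ex(4)] by auto
    have s: "sd x < 2" "sd w < 2" "sd x' < 2" "sd w' < 2" using C1 ex by auto
    show ?thesis unfolding e e' blk_simp using P' s by (auto split: if_splits)
  qed
  obtain bij: "bij_betw (\<lambda>e. (fst (blk e), snd (blk e), card {e'\<in>EE n A. blk e' = blk e \<and> (\<lambda>p q. prec A q p) e' e})) (EE n A) ({..<n} \<times> UNIV)"
    and rkiff: "\<forall>e\<in>EE n A. \<forall>e'\<in>EE n A. blk e = blk e' \<longrightarrow> ((\<lambda>p q. prec A q p) e e' \<longleftrightarrow>
          card {y\<in>EE n A. blk y = blk e \<and> (\<lambda>p q. prec A q p) y e} < card {y\<in>EE n A. blk y = blk e' \<and> (\<lambda>p q. prec A q p) y e'})"
    using blocks_bij[OF PR1 PR2 PR3 rng inf fin] by blast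
  show ?thesis
  proof (rule iso_from_bij[OF _ PR(1) PR(3) _ ])
    show "bij_betw (\<lambda>e. (fst (blk e), snd (blk e), card {e'\<in>EE n A. blk e' = blk e \<and> (\<lambda>p q. prec A q p) e' e})) (EE n A) (fst (T2 n))"
      using bij T2_dom by simp
    show "\<forall>a b. (a, b) \<in> snd (T2 n) \<longrightarrow> (b, a) \<notin> snd (T2 n)" using T2_asym by blast
    show "\<forall>x\<in>EE n A. \<forall>y\<in>EE n A. prec A x y \<longrightarrow>
       ((fst (blk x), snd (blk x), card {e'\<in>EE n A. blk e' = blk x \<and> (\<lambda>p q. prec A q p) e' x}),
        (fst (blk y), snd (blk y), card {e'\<in>EE n A. blk e' = blk y \<and> (\<lambda>p q. prec A q p) e' y})) \<in> snd (T2 n)"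
    proof (intro ballI impI)
      fix x y assume xy: "x \<in> EE n A" "y \<in> EE n A" "prec A x y"
      have r: "fst (blk x) < n" "fst (blk y) < n" using rng xy by auto
      show "((fst (blk x), snd (blk x), card {e'\<in>EE n A. blk e' = blk x \<and> (\<lambda>p q. prec A q p) e' x}),
        (fst (blk y), snd (blk y), card {e'\<in>EE n A. blk e' = blk y \<and> (\<lambda>p q. prec A q p) e' y})) \<in> snd (T2 n)"
      proof (cases "blk x = blk y")
        case True
        then have "card {e'\<in>EE n A. blk e' = blk y \<and> (\<lambda>p q. prec A q p) e' y}
            < card {e'\<in>EE n A. blk e' = blk x \<and> (\<lambda>p q. prec A q p) e' x}"
          using rkiff xy by auto
        then show ?thesis using True r unfolding T2_rel by auto
      next
        case False
        then show ?thesis using mono[OF xy] r unfolding T2_rel by (auto simp: prod_eq_iff)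
      qed
    qed
  qed
qed

lemma outB_iso: "lo_iso (outB n A) (EE n A, {(p, q). p \<in> EE n A \<and> q \<in> EE n A \<and> prec A p q})"
proof (rule lo_iso_sym)
  show "lo_iso (EE n A, {(p, q). p \<in> EE n A \<and> q \<in> EE n A \<and> prec A p q}) (outB n A)"
    unfolding lo_iso_def
  proof (rule exI[of _ enc], intro conjI)
    show "bij_betw enc (fst (EE n A, {(p, q). p \<in> EE n A \<and> q \<in> EE n A \<and> prec A p q})) (fst (outB n A))"
      unfolding bij_betw_def inj_on_def outB_def by simp
    show "\<forall>x\<in>fst (EE n A, {(p, q). p \<in> EE n A \<and> q \<in> EE n A \<and> prec A p q}).
       \<forall>y\<in>fst (EE n A, {(p, q). p \<in> EE n A \<and> q \<in> EE n A \<and> prec A p q}).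
         ((x, y) \<in> snd (EE n A, {(p, q). p \<in> EE n A \<and> q \<in> EE n A \<and> prec A p q})) = ((enc x, enc y) \<in> snd (outB n A))"
      by (simp add: outB_rel)
  qed
qed

lemma out_type:
  assumes "A \<in> cls2 W1 W2"
  shows "outB n A \<in> cls2 (T1 n) (T2 n)"
    and "lo_iso A W1 \<Longrightarrow> lo_iso (outB n A) (T1 n)"
    and "lo_iso A W2 \<Longrightarrow> lo_iso (outB n A) (T2 n)"
proof -
  have lo: "is_lo A" using assms unfolding cls2_def by blast
  show t1: "lo_iso A W1 \<Longrightarrow> lo_iso (outB n A) (T1 n)"
    using lo_iso_trans[OF outB_iso W1_iso[OF lo]] by blast
  show t2: "lo_iso A W2 \<Longrightarrow> lo_iso (outB n A) (T2 n)"
    using lo_iso_trans[OF outB_iso W2_iso[OF lo]] by blast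
  show "outB n A \<in> cls2 (T1 n) (T2 n)"
    using assms t1 t2 is_lo_outB[OF lo] unfolding cls2_def by blast
qed

theorem corollary3p4:
  fixes n :: nat
  assumes "n \<ge> 1"
  shows "cls2 (lo_mult omega (fin_ord 2)) (lo_mult (lo_rev omega) (fin_ord 2))
     \<le>\<^sub>c cls2 (lo_mult (lo_mult omega omega) (fin_ord n))
               (lo_mult (lo_rev (lo_mult omega omega)) (fin_ord n))"
  unfolding comp_emb_def
proof (rule exI[of _ "Gam n"], intro conjI)
  show "enum_op (Gam n)" using enum_op_Gam assms by simp
  show "\<forall>A\<in>cls2 W1 W2. \<exists>B\<in>cls2 (T1 n) (T2 n). enum_apply (Gam n) (diag A) = diag B"
  proof
    fix A assume A: "A \<in> cls2 W1 W2"
    then have "is_lo A" unfolding cls2_def by blast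
    then show "\<exists>B\<in>cls2 (T1 n) (T2 n). enum_apply (Gam n) (diag A) = diag B"
      using out_type(1)[OF A] diag_out by blast
  qed
  show "\<forall>A\<in>cls2 W1 W2. \<forall>A'\<in>cls2 W1 W2. \<forall>B\<in>cls2 (T1 n) (T2 n). \<forall>B'\<in>cls2 (T1 n) (T2 n).
     enum_apply (Gam n) (diag A) = diag B \<longrightarrow> enum_apply (Gam n) (diag A') = diag B' \<longrightarrow>
     lo_iso A A' = lo_iso B B'"
  proof (intro ballI impI)
    fix A A' B B'
    assume A: "A \<in> cls2 W1 W2" and A': "A' \<in> cls2 W1 W2" and B: "B \<in> cls2 (T1 n) (T2 n)"
      and B': "B' \<in> cls2 (T1 n) (T2 n)"
      and e: "enum_apply (Gam n) (diag A) = diag B" and e': "enum_apply (Gam n) (diag A') = diag B'"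
    have lo: "is_lo A" "is_lo A'" "is_lo B" "is_lo B'" using A A' B B' unfolding cls2_def by blast+
    have BB: "B = outB n A" using diag_inj[OF lo(3) is_lo_outB[OF lo(1)]] e diag_out[OF lo(1)] by simp
    have BB': "B' = outB n A'" using diag_inj[OF lo(4) is_lo_outB[OF lo(2)]] e' diag_out[OF lo(2)] by simp
    have cA: "lo_iso A W1 \<or> lo_iso A W2" and cA': "lo_iso A' W1 \<or> lo_iso A' W2"
      using A A' unfolding cls2_def by blast+
    have n1: "1 \<le> n" using assms by simp
    show "lo_iso A A' = lo_iso B B'"
    proof -
      { fix X Y and LX LY :: "(nat \<times> nat) lo" and TX TY :: "(nat \<times> nat \<times> nat) lo"
        assume "lo_iso X LX" "lo_iso Y LY" "lo_iso (outB n X) TX" "lo_iso (outB n Y) TY"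
          "LX = LY" "TX = TY"
        then have "lo_iso X Y \<and> lo_iso (outB n X) (outB n Y)"
          using lo_iso_trans lo_iso_sym by metis }
      note same = this
      { fix X Y
        assume "lo_iso X W1" "lo_iso Y W2" "lo_iso (outB n X) (T1 n)" "lo_iso (outB n Y) (T2 n)"
        then have "\<not> lo_iso X Y \<and> \<not> lo_iso (outB n X) (outB n Y) \<and> \<not> lo_iso Y X \<and> \<not> lo_iso (outB n Y) (outB n X)"
          using lo_iso_trans lo_iso_sym W1_not_W2 T1_not_T2[OF n1] by metis }
      note diff = this
      show ?thesis
        using cA cA' out_type(2,3)[OF A] out_type(2,3)[OF A'] same diff unfolding BB BB' by metis
    qed
  qed
qed

end
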